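(* Let $\phi\in C_L(N)$ with $N\ge2$, let $h\in C_0^\infty$ be fixed, and set $\widetilde S_2(x)=\sum_{p\notin S_\phi}c_{\phi,2}(p)\log p\;h(xp^2)$. Then $\widetilde S_2(x)=O(x^{-1/2-\varepsilon})$ as $x\to0^+$ for every $\varepsilon>0$. Moreover, if $\sum_{p\le T,\,p\notin S_\phi}c_{\phi,2}(p)\log p=A_\phi T^{\mu}+O(T^{\nu+\varepsilon})$ for every $\varepsilon>0$ with constants $A_\phi,\mu\in\mathbb C$, $\nu>0$, $\mathrm{Re}(\mu)>\nu$, then for every $\varepsilon>0$, as $x\to0^+$, $$\widetilde S_2(x)=\mu A_\phi\int_0^\infty h(xu^2)u^{\mu}\frac{du}{u}+O(x^{-\nu/2-\varepsilon}).$$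
   Context: $C_0^\infty$ is the space of smooth compactly supported $h:(0,\infty)\to\mathbb C$. The Selberg class $\mathcal S$ consists of functions $L(s)$ such that: (S1) $L(s)=\sum_{n\ge1}a(n)n^{-s}$ converges absolutely for $\mathrm{Re}(s)>1$; (S2) for some integer $m\ge0$, $(s-1)^mL(s)$ extends to an entire function of finite order; (S3) there are $Q>0$, $r\ge1$, $\lambda_j>0$, $\mu_j\in\mathbb C$ with $\mathrm{Re}(\mu_j)\ge0$ and $|\omega|=1$ such that $L^*(s):=Q^s\prod_{j=1}^r\Gamma(\lambda_js+\mu_j)L(s)$ satisfies $L^*(s)=\omega\overline{L^*(1-\bar s)}$; (S4) $a(n)\ll_\varepsilon n^{\varepsilon}$ for every $\varepsilon>0$; (S5) $\log L(s)=\sum_{n\ge1}b(n)n^{-s}$ where $b(n)=0$ unless $n$ is a prime power $p^m$, $m\ge1$, and $b(n)\ll n^{\theta}$ for some $\theta<1/2$. $L\in\mathcal S$ has a rank $N$ Euler product if $L(s)=\prod_pP_p(p^{-s})^{-1}$ with $P_p(X)=1-c_1(p)X-\dots-c_N(p)X^N$ and $c_N(p)\ne0$ for all but finitely many $p$; $S_L$ is the finite set of primes with $c_N(p)=0$. For $\phi:(0,\infty)\to\mathbb C$ put $L_\phi(s)=\sum_{n\ge1}\phi(n)n^{-s}$. $C_L(N)$ is the set of smooth $\phi:(0,\infty)\to\mathbb C$ with $|\phi(u)|\le Cu^2$ for some $C>0$ and all $u>0$, $L_\phi\in\mathcal S$, and $L_\phi$ having a rank $N$ Euler product; $c_{\phi,l}(p)$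 is the coefficient $c_l(p)$ of $L_\phi$ and $S_\phi=S_{L_\phi}$. *)

theory Defs
  imports "HOL-Analysis.Analysis" "HOL-Library.Landau_Symbols"
begin

definition dirichlet_L :: "(nat \<Rightarrow> complex) \<Rightarrow> complex \<Rightarrow> complex" where
  "dirichlet_L a s = (\<Sum>n. a (Suc n) * of_nat (Suc n) powr (- s))"

definition finite_order :: "(complex \<Rightarrow> complex) \<Rightarrow> bool" where
  "finite_order F \<longleftrightarrow> (\<exists>\<rho> C. \<forall>s. norm (F s) \<le> C * exp (norm s powr \<rho>))"

text \<open>The continuation of L_a is F(s)/(s-1)^m; the functional equation of the
  meromorphic function L^* is required at every point where both sides are defined.\<close>
definition selberg_class :: "(nat \<Rightarrow> complex) \<Rightarrow> bool" where
  "selberg_class a \<longleftrightarrow>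
    (\<forall>s. Re s > 1 \<longrightarrow> summable (\<lambda>n. norm (a (Suc n) * of_nat (Suc n) powr (- s)))) \<and>
    (\<exists>(m::nat) F. F holomorphic_on UNIV \<and> finite_order F \<and>
       (\<forall>s. Re s > 1 \<longrightarrow> F s = (s - 1) ^ m * dirichlet_L a s) \<and>
       (\<exists>(Q::real) (r::nat) (lam::nat \<Rightarrow> real) (mu::nat \<Rightarrow> complex) (\<omega>::complex).
          Q > 0 \<and> r \<ge> 1 \<and> (\<forall>j\<in>{1..r}. lam j > 0 \<and> Re (mu j) \<ge> 0) \<and> norm \<omega> = 1 \<and>
          (let Lstar = (\<lambda>s. of_real Q powr s * (\<Prod>j=1..r. Gamma (of_real (lam j) * s + mu j))
                              * (F s / (s - 1) ^ m))
           in \<forall>s. s \<noteq> 0 \<and> s \<noteq> 1 \<and>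
                 (\<forall>j\<in>{1..r}. of_real (lam j) * s + mu j \<notin> \<int>\<^sub>\<le>\<^sub>0) \<and>
                 (\<forall>j\<in>{1..r}. of_real (lam j) * (1 - cnj s) + mu j \<notin> \<int>\<^sub>\<le>\<^sub>0) \<longrightarrow>
                 Lstar s = \<omega> * cnj (Lstar (1 - cnj s))))) \<and>
    (\<forall>\<epsilon>>0. \<exists>C. \<forall>n\<ge>1. norm (a n) \<le> C * real n powr \<epsilon>) \<and>
    (\<exists>b::nat \<Rightarrow> complex.
       (\<forall>n. b n \<noteq> 0 \<longrightarrow> (\<exists>p k. prime p \<and> k \<ge> 1 \<and> n = p ^ k)) \<and>
       (\<exists>\<theta>::real. \<theta> < 1/2 \<and> (\<exists>C. \<forall>n\<ge>1. norm (b n) \<le> C * real n powr \<theta>)) \<and>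
       (\<forall>s. Re s > 1 \<longrightarrow> dirichlet_L a s = exp (\<Sum>n. b (Suc n) * of_nat (Suc n) powr (- s))))"

definition euler_product_rank :: "(nat \<Rightarrow> complex) \<Rightarrow> nat \<Rightarrow> (nat \<Rightarrow> nat \<Rightarrow> complex) \<Rightarrow> bool" where
  "euler_product_rank a N c \<longleftrightarrow>
     finite {p::nat. prime p \<and> c N p = 0} \<and>
     (\<forall>s. Re s > 1 \<longrightarrow>
        (\<lambda>x. \<Prod>p\<in>{p::nat. prime p \<and> p \<le> x}.
               inverse (1 - (\<Sum>l=1..N. c l p * (of_nat p powr (- s)) ^ l)))
        \<longlonglongrightarrow> dirichlet_L a s)"

definition vderiv_iter :: "nat \<Rightarrow> (real \<Rightarrow> complex) \<Rightarrow> real \<Rightarrow> complex" where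
  "vderiv_iter k f = ((\<lambda>g y. vector_derivative g (at y)) ^^ k) f"

definition smooth_on :: "real set \<Rightarrow> (real \<Rightarrow> complex) \<Rightarrow> bool" where
  "smooth_on S f \<longleftrightarrow> (\<forall>k. \<forall>x\<in>S. vderiv_iter k f differentiable (at x))"

definition C0inf :: "(real \<Rightarrow> complex) \<Rightarrow> bool" where
  "C0inf h \<longleftrightarrow> smooth_on {0<..} h \<and>
     (\<exists>a b. 0 < a \<and> a \<le> b \<and> (\<forall>x>0. x \<notin> {a..b} \<longrightarrow> h x = 0))"

definition CL_class :: "(real \<Rightarrow> complex) \<Rightarrow> nat \<Rightarrow> bool" where
  "CL_class \<phi> N \<longleftrightarrow> smooth_on {0<..} \<phi> \<and>
     (\<exists>C>0. \<forall>u>0. norm (\<phi> u) \<le> C * u ^ 2) \<and>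
     selberg_class (\<lambda>n. \<phi> (real n)) \<and>
     (\<exists>c. euler_product_rank (\<lambda>n. \<phi> (real n)) N c)"

text \<open>S~_2(x) = sum_{p prime, p \<notin> S_\<phi>} c_2(p) log p h(x p^2) (finitely many nonzero terms).\<close>
definition S2tilde :: "(nat \<Rightarrow> nat \<Rightarrow> complex) \<Rightarrow> nat \<Rightarrow> (real \<Rightarrow> complex) \<Rightarrow> real \<Rightarrow> complex" where
  "S2tilde c N h x = (\<Sum>p. if prime p \<and> c N p \<noteq> 0
                           then c 2 p * of_real (ln (real p)) * h (x * (real p) ^ 2) else 0)"

end

theory Submission
  imports Defs "HOL-Computational_Algebra.Fundamental_Theorem_Algebra"
begin

lemma coeff_lin_mult: "coeff ([:1, - w:] * q) l = coeff q l - (if l = 0 then 0 else w * coeff q (l - 1))"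
  for w :: complex
  by (cases l) (simp_all add: mult_pCons_left)

lemma coeff_prod_linear_bound:
  fixes w :: "nat \<Rightarrow> complex"
  assumes "\<And>i. norm (w i) \<le> W"
  shows "norm (coeff (\<Prod>i<n. [:1, - w i:]) l) \<le> (1 + W) ^ n"
proof (induction n arbitrary: l)
  case 0
  then show ?case by (cases l) auto
next
  case (Suc n)
  have W0: "0 \<le> W" using assms[of 0] norm_ge_zero order_trans by blast
  have eq: "(\<Prod>i<Suc n. [:1, - w i:]) = [:1, - w n:] * (\<Prod>i<n. [:1, - w i:])"
    by (simp add: mult.commute)
  have "norm (coeff ([:1, - w n:] * (\<Prod>i<n. [:1, - w i:])) l)
        \<le> (1+W)^n + W * (1+W)^n"
    unfolding coeff_lin_mult
    by (smt (verit) Suc.IH W0 assms mult_mono norm_ge_zero norm_mult norm_triangle_ineq4 zero_le_power norm_zero)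
  also have "\<dots> = (1+W)^Suc n" by (simp add: algebra_simps)
  finally show ?case unfolding eq .
qed

lemma poly_coeff_bound_noroots:
  fixes P :: "complex poly" and R :: real
  assumes R: "R > 0" and P0: "poly P 0 = 1" and nz: "\<And>z. norm z < R \<Longrightarrow> poly P z \<noteq> 0"
  shows "norm (coeff P l) \<le> (1 + 1/R) ^ degree P"
proof -
  obtain root where dec: "smult (lead_coeff P) (\<Prod>i<degree P. [:-root i, 1:]) = P"
    using complex_poly_decompose' by blast
  define d where "d = degree P"
  have rootP: "poly P (root i) = 0" if "i < d" for i
  proof -
    have "poly (\<Prod>i<degree P. [:-root i, 1:]) (root i) = 0"
      using that unfolding d_def poly_prod by (intro prod_zero) (auto intro!: bexI[of _ i])
    then show ?thesis by (subst dec[symmetric]) simp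
  qed
  have rge: "norm (root i) \<ge> R" if "i < d" for i
    using nz rootP[OF that] by force
  have rnz: "root i \<noteq> 0" if "i < d" for i using rge[OF that] R by auto
  define w where "w i = 1 / root i" for i
  have wb: "norm (w i) \<le> 1/R" if "i < d" for i
    using rge[OF that] R unfolding w_def by (simp add: norm_divide divide_simps)
  define w' where "w' i = (if i < d then w i else 0)" for i
  have wb': "norm (w' i) \<le> 1/R" for i using wb R unfolding w'_def by auto
  have fac: "[:-root i, 1:] = smult (- root i) [:1, - w' i:]" if "i < d" for i
    using rnz[OF that] that unfolding w'_def w_def by simp
  have "(\<Prod>i<d. [:-root i, 1:]) = (\<Prod>i<d. smult (- root i) [:1, - w' i:])"
    using fac by (intro prod.cong) auto
  also have "\<dots> = smult (\<Prod>i<d. - root i) (\<Prod>i<d. [:1, - w' i:])" by (rule prod_smult)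
  finally have P_eq: "P = smult (lead_coeff P * (\<Prod>i<d. - root i)) (\<Prod>i<d. [:1, - w' i:])"
    using dec unfolding d_def by (metis smult_smult)
  define K where "K = lead_coeff P * (\<Prod>i<d. - root i)"
  have "poly (\<Prod>i<d. [:1, - w' i:]) 0 = 1" by (simp add: poly_prod)
  moreover have "poly P 0 = K * poly (\<Prod>i<d. [:1, - w' i:]) 0"
    using arg_cong[OF P_eq, of "\<lambda>q. poly q 0"] unfolding K_def by simp
  ultimately have "K = 1" using P0 by simp
  with P_eq have "P = (\<Prod>i<d. [:1, - w' i:])" unfolding K_def by simp
  then have "norm (coeff P l) \<le> (1 + 1/R) ^ d"
    using coeff_prod_linear_bound[OF wb', where n=d and l=l] by simp
  then show ?thesis unfolding d_def .
qed

lemma dirichlet_poly_unique: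
  fixes S :: "nat set" and G :: "nat \<Rightarrow> complex" and M :: nat and q K :: real
  assumes finS: "finite S" and S0: "0 \<notin> S" and qM: "real M < q"
    and bnd: "\<And>m. m \<ge> mm \<Longrightarrow> norm (\<Sum>n\<in>S. G n / of_nat n ^ m) \<le> K / q ^ m"
  shows "n \<in> S \<Longrightarrow> n \<le> M \<Longrightarrow> G n = 0"
proof (induction n rule: less_induct)
  case (less n)
  have n0: "n > 0" using less.prems S0 by (cases n) auto
  have q0: "q > 0" using qM by (smt (verit) of_nat_0_le_iff)
  define S' where "S' = {n'\<in>S. n' > n}"
  have finS': "finite S'" using finS unfolding S'_def by auto
  have split: "(\<Sum>n'\<in>S. G n' / of_nat n' ^ m) = G n / of_nat n ^ m + (\<Sum>n'\<in>S'. G n' / of_nat n' ^ m)" for m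
  proof -
    define L where "L = {n'\<in>S. n' < n}"
    have eqS: "S = insert n (S' \<union> L)" using less.prems unfolding S'_def L_def by auto
    have fin: "finite S'" "finite L" using finS unfolding S'_def L_def by auto
    have dis: "S' \<inter> L = {}" "n \<notin> S' \<union> L" unfolding S'_def L_def by auto
    have L0: "(\<Sum>n'\<in>L. G n' / of_nat n' ^ m) = 0"
      using less.IH less.prems unfolding L_def by (intro sum.neutral) auto
    show ?thesis
      apply (subst eqS)
      apply (subst sum.insert)
      using fin dis L0 by (auto simp: sum.union_disjoint)
  qed
  define f where "f m = K * (real n / q) ^ m + (\<Sum>n'\<in>S'. norm (G n') * (real n / real n') ^ m)" for m
  have "f \<longlonglongrightarrow> K * 0 + (\<Sum>n'\<in>S'. norm (G n') * 0)"
    unfolding f_def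
  proof (intro tendsto_intros LIMSEQ_power_zero)
    show "norm (real n / q) < 1" using less.prems qM n0 q0 by (simp add: abs_of_pos divide_less_eq)
    fix n' assume "n' \<in> S'"
    then show "norm (real n / real n') < 1" using n0 unfolding S'_def by (simp add: divide_less_eq)
  qed
  then have f0: "f \<longlonglongrightarrow> 0" by simp
  have le: "norm (G n) \<le> f m" if "m \<ge> mm" for m
  proof -
    have "G n = of_nat n ^ m * (\<Sum>n'\<in>S. G n' / of_nat n' ^ m) - (\<Sum>n'\<in>S'. G n' * (of_nat n / of_nat n') ^ m)"
      unfolding split using n0 by (simp add: algebra_simps sum_distrib_left power_divide)
    also have "norm \<dots> \<le> norm (of_nat n ^ m * (\<Sum>n'\<in>S. G n' / of_nat n' ^ m)) + norm (\<Sum>n'\<in>S'. G n' * (of_nat n / of_nat n') ^ m)"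
      by (rule norm_triangle_ineq4)
    also have "norm (of_nat n ^ m * (\<Sum>n'\<in>S. G n' / of_nat n' ^ m) :: complex) \<le> real n ^ m * (K / q ^ m)"
      using mult_left_mono[OF bnd[OF that], of "real n ^ m"] by (simp add: norm_mult norm_power)
    also have "real n ^ m * (K / q ^ m) = K * (real n / q) ^ m" by (simp add: power_divide)
    also have "norm (\<Sum>n'\<in>S'. G n' * (of_nat n / of_nat n') ^ m) \<le> (\<Sum>n'\<in>S'. norm (G n' * (of_nat n / of_nat n') ^ m :: complex))"
      by (rule norm_sum)
    also have "\<dots> = (\<Sum>n'\<in>S'. norm (G n') * (real n / real n') ^ m)"
      by (simp add: norm_mult norm_power norm_divide)
    finally show ?thesis unfolding f_def by simp
  qed
  have "norm (G n) \<le> 0"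
    by (rule tendsto_le[OF sequentially_bot f0 tendsto_const]) (use le in \<open>auto simp: eventually_at_top_linorder\<close>)
  then show ?case by simp
qed

lemma dirichlet_poly_unique_gen:
  fixes J :: "'a set" and \<nu> :: "'a \<Rightarrow> nat" and g :: "'a \<Rightarrow> complex" and M :: nat and q K :: real
    and c0 :: complex
  assumes finJ: "finite J" and pos: "\<And>j. j \<in> J \<Longrightarrow> \<nu> j > 0" and qM: "real M < q"
    and bnd: "\<And>m. m \<ge> mm \<Longrightarrow> norm ((\<Sum>j\<in>J. g j / of_nat (\<nu> j) ^ m) - c0) \<le> K / q ^ m"
    and n: "1 \<le> n" "n \<le> M"
  shows "(\<Sum>j\<in>{j\<in>J. \<nu> j = n}. g j) = (if n = 1 then c0 else 0)"
proof -
  define S where "S = insert 1 (\<nu> ` J)"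
  define G where "G n = (\<Sum>j\<in>{j\<in>J. \<nu> j = n}. g j) - (if n = 1 then c0 else 0)" for n
  have finS: "finite S" using finJ unfolding S_def by auto
  have S0: "0 \<notin> S" using pos unfolding S_def by force
  have eq: "(\<Sum>n\<in>S. G n / of_nat n ^ m) = (\<Sum>j\<in>J. g j / of_nat (\<nu> j) ^ m) - c0" for m
  proof -
    have "(\<Sum>n\<in>S. G n / of_nat n ^ m) = (\<Sum>n\<in>S. (\<Sum>j\<in>{j\<in>J. \<nu> j = n}. g j / of_nat (\<nu> j) ^ m))
           - (\<Sum>n\<in>S. (if n = 1 then c0 else 0) / of_nat n ^ m)"
      unfolding G_def by (simp add: diff_divide_distrib sum_divide_distrib sum_subtractf)
    also have "(\<Sum>n\<in>S. (\<Sum>j\<in>{j\<in>J. \<nu> j = n}. g j / of_nat (\<nu> j) ^ m)) = (\<Sum>j\<in>J. g j / of_nat (\<nu> j) ^ m)"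
      by (rule sum.group[OF finJ finS]) (auto simp: S_def)
    also have "(\<Sum>n\<in>S. (if n = 1 then c0 else 0) / of_nat n ^ m) = c0"
    proof -
      have "(\<Sum>n\<in>S. (if n = 1 then c0 else 0) / of_nat n ^ m) = (\<Sum>n\<in>S. if n = 1 then c0 else 0)"
        by (rule sum.cong) auto
      also have "\<dots> = c0" using finS by (simp add: S_def)
      finally show ?thesis .
    qed
    finally show ?thesis .
  qed
  have "G n = 0"
  proof (cases "n \<in> S")
    case True
    show ?thesis
      by (rule dirichlet_poly_unique[OF finS S0 qM, where G=G and mm=mm and K=K]) (use bnd eq True n in auto)
  next
    case False
    then have "{j\<in>J. \<nu> j = n} = {}" "n \<noteq> 1" unfolding S_def by auto
    then show ?thesis unfolding G_def by (simp only: sum.empty) simp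
  qed
  then show ?thesis unfolding G_def by simp
qed

lemma pie_prime_power_eq:
  fixes F :: "nat set" and p i :: nat and k :: "nat \<Rightarrow> nat"
  assumes finF: "finite F" and prF: "\<And>r. r \<in> F \<Longrightarrow> prime r" and pF: "p \<in> F"
    and kS: "k \<in> PiE F (\<lambda>_. {0..N})" and eq: "(\<Prod>r\<in>F. r ^ k r) = p ^ i"
  shows "k = (\<lambda>r. if r \<in> F then (if r = p then i else 0) else undefined)"
proof
  fix r
  show "k r = (if r \<in> F then (if r = p then i else 0) else undefined)"
  proof (cases "r \<in> F")
    case True
    have "multiplicity r (\<Prod>r\<in>F. r ^ k r) = k r"
      using multiplicity_prod_prime_powers[OF finF, of r k] prF True by auto
    moreover have "multiplicity r (p ^ i) = (if r = p then i else 0)"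
      using prF[OF True] prF[OF pF] by (auto simp: multiplicity_distinct_prime_power)
    ultimately show ?thesis using eq True by simp
  next
    case False
    then show ?thesis using kS by (auto simp: PiE_def extensional_def)
  qed
qed

lemma fiber_prime_power:
  fixes F :: "nat set" and p M N i :: nat
  assumes finF: "finite F" and prF: "\<And>r. r \<in> F \<Longrightarrow> prime r" and pF: "p \<in> F"
    and iN: "i \<le> N" and iM: "p ^ i \<le> M"
  defines "kk \<equiv> (\<lambda>t r. if r \<in> F then (if r = p then t else 0) else undefined)"
  shows "{j \<in> {1..M} \<times> PiE F (\<lambda>_. {0..N}). fst j * (\<Prod>r\<in>F. r ^ (snd j) r) = p ^ i}
         = (\<lambda>t. (p ^ (i - t), kk t)) ` {0..i}"
proof -
  have pp: "prime p" using prF pF by auto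
  have prodkk: "(\<Prod>r\<in>F. r ^ kk t r) = p ^ t" for t
  proof -
    have "(\<Prod>r\<in>F. r ^ kk t r) = (\<Prod>r\<in>F. if r = p then p ^ t else 1)"
      unfolding kk_def by (intro prod.cong) auto
    also have "\<dots> = p ^ t" using finF pF by (simp add: prod.delta)
    finally show ?thesis .
  qed
  show ?thesis
  proof (intro equalityI subsetI)
    fix j assume j: "j \<in> {j \<in> {1..M} \<times> PiE F (\<lambda>_. {0..N}). fst j * (\<Prod>r\<in>F. r ^ (snd j) r) = p ^ i}"
    obtain m k where jmk: "j = (m, k)" by (cases j)
    have kS: "k \<in> PiE F (\<lambda>_. {0..N})" and mk: "m * (\<Prod>r\<in>F. r ^ k r) = p ^ i"
      using j jmk by auto
    then have "(\<Prod>r\<in>F. r ^ k r) dvd p ^ i" by (metis dvd_triv_right)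
    then obtain t where t: "t \<le> i" "(\<Prod>r\<in>F. r ^ k r) = p ^ t"
      using divides_primepow_nat[OF pp] by blast
    have kk: "k = kk t" using pie_prime_power_eq[OF finF prF pF kS t(2)] unfolding kk_def .
    have "m * p ^ t = p ^ (i - t) * p ^ t" using mk t by (simp add: power_add[symmetric])
    then have "m = p ^ (i - t)" using pp by (simp add: prime_gt_0_nat)
    then show "j \<in> (\<lambda>t. (p ^ (i - t), kk t)) ` {0..i}" using jmk kk t by auto
  next
    fix j assume "j \<in> (\<lambda>t. (p ^ (i - t), kk t)) ` {0..i}"
    then obtain t where t: "t \<le> i" "j = (p ^ (i - t), kk t)" by auto
    have "p ^ (i - t) \<le> p ^ i" using t prime_ge_1_nat[OF pp] by (intro power_increasing) auto
    moreover have "p ^ (i - t) \<ge> 1" using pp by (simp add: prime_gt_0_nat Suc_le_eq)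
    moreover have "kk t \<in> PiE F (\<lambda>_. {0..N})" using t iN unfolding kk_def by auto
    moreover have "p ^ (i - t) * p ^ t = p ^ i" using t by (simp add: power_add[symmetric])
    ultimately show "j \<in> {j \<in> {1..M} \<times> PiE F (\<lambda>_. {0..N}). fst j * (\<Prod>r\<in>F. r ^ (snd j) r) = p ^ i}"
      using t iM prodkk by auto
  qed
qed

lemma kk_inj:
  assumes "p \<in> F"
  shows "inj_on (\<lambda>t. (p ^ (i - t), (\<lambda>r. if r \<in> F then (if r = p then t else 0) else undefined))) A"
  by (rule inj_onI) (use assms in \<open>auto dest: fun_cong[of _ _ p]\<close>)

lemma euler_factor_nz:
  fixes c :: "nat \<Rightarrow> nat \<Rightarrow> complex" and L :: complex and s :: complex
  assumes lim: "(\<lambda>x. \<Prod>p\<in>{p::nat. prime p \<and> p \<le> x}.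
               inverse (1 - (\<Sum>l=1..N. c l p * (of_nat p powr (- s)) ^ l))) \<longlonglongrightarrow> L"
    and Lnz: "L \<noteq> 0" and r: "prime r"
  shows "1 - (\<Sum>l=1..N. c l r * (of_nat r powr (- s)) ^ l) \<noteq> 0"
proof
  assume z: "1 - (\<Sum>l=1..N. c l r * (of_nat r powr (- s)) ^ l) = 0"
  have ev: "eventually (\<lambda>x. (\<Prod>p\<in>{p::nat. prime p \<and> p \<le> x}.
               inverse (1 - (\<Sum>l=1..N. c l p * (of_nat p powr (- s)) ^ l))) = 0) sequentially"
    unfolding eventually_sequentially
  proof (intro exI allI impI)
    fix x assume "r \<le> x"
    then show "(\<Prod>p\<in>{p::nat. prime p \<and> p \<le> x}.
               inverse (1 - (\<Sum>l=1..N. c l p * (of_nat p powr (- s)) ^ l))) = 0"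
      using z r by (intro prod_zero) auto
  qed
  have "(\<lambda>x. 0::complex) \<longlonglongrightarrow> L"
    using Lim_transform_eventually[OF lim ev] .
  then have "L = 0" using LIMSEQ_const_iff by metis
  with Lnz show False by simp
qed

lemma factor_nz_disk:
  fixes c :: "nat \<Rightarrow> nat \<Rightarrow> complex" and z :: complex
  assumes nz: "\<And>s. Re s > 1 \<Longrightarrow> 1 - (\<Sum>l=1..N. c l r * (of_nat r powr (- s)) ^ l) \<noteq> 0"
    and r: "prime r" and zr: "norm z < 1 / real r"
  shows "1 - (\<Sum>l=1..N. c l r * z ^ l) \<noteq> 0"
proof (cases "z = 0")
  case True
  then show ?thesis by simp
next
  case False
  have r1: "real r > 1" using prime_gt_1_nat[OF r] by simp
  have lnr: "ln (real r) > 0" using r1 by simp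
  define s where "s = - Ln z / of_real (ln (real r))"
  have "ln (norm z) < ln (1 / real r)" using zr False r1 by (simp add: ln_less_cancel_iff)
  also have "ln (1 / real r) = - ln (real r)" using r1 by (simp add: ln_div)
  finally have "- ln (norm z) / ln (real r) > 1" using lnr by (simp add: divide_simps)
  moreover have "Re s = - ln (norm z) / ln (real r)"
    unfolding s_def using False by (simp add: Re_divide_of_real)
  ultimately have Res: "Re s > 1" by simp
  have "of_nat r powr (- s) = exp ((- s) * Ln (of_nat r))"
    using r1 by (simp add: powr_def)
  also have "Ln (of_nat r) = of_real (ln (real r))" using r1 by simp
  also have "(- s) * of_real (ln (real r)) = Ln z" unfolding s_def using lnr by simp
  also have "exp (Ln z) = z" using False by simp
  finally show ?thesis using nz[OF Res] by simp
qed

lemma coeff_bound_from_disk: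
  fixes c :: "nat \<Rightarrow> nat \<Rightarrow> complex" and r :: nat
  assumes nz: "\<And>z. norm z < 1 / real r \<Longrightarrow> 1 - (\<Sum>l=1..N. c l r * z ^ l) \<noteq> 0"
    and r: "r > 0" and l: "l \<in> {1..N}"
  shows "norm (c l r) \<le> (1 + real r) ^ N"
proof -
  define P :: "complex poly" where "P = 1 - (\<Sum>l=1..N. monom (c l r) l)"
  have polyP: "poly P z = 1 - (\<Sum>l=1..N. c l r * z ^ l)" for z
    unfolding P_def by (simp add: poly_sum poly_monom)
  have coeffP: "coeff P l = - c l r"
    using l unfolding P_def by (simp add: coeff_sum coeff_monom)
  have degP: "degree P \<le> N"
    unfolding P_def
    by (intro degree_diff_le) (auto intro!: degree_sum_le order.trans[OF degree_monom_le])
  have "norm (coeff P l) \<le> (1 + 1 / (1 / real r)) ^ degree P"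
    by (rule poly_coeff_bound_noroots) (use r polyP nz in auto)
  also have "\<dots> \<le> (1 + real r) ^ N" using degP by (simp add: power_increasing)
  finally show ?thesis using coeffP by simp
qed

lemma tail_prod_bound:
  fixes u :: "nat \<Rightarrow> complex" and T :: "nat set" and B Z :: real
  assumes finT: "finite T" and ub: "\<And>r. r \<in> T \<Longrightarrow> norm (u r) \<le> B / real r ^ 2"
    and uh: "\<And>r. r \<in> T \<Longrightarrow> norm (u r) \<le> 1/2"
    and Zb: "(\<Sum>r\<in>T. 1 / real r ^ 2) \<le> Z" and B0: "B \<ge> 0" and BZ: "2 * B * Z \<le> 1/2"
  shows "norm ((\<Prod>r\<in>T. inverse (1 - u r)) - 1) \<le> 4 * B * Z"
proof -
  define w where "w r = inverse (1 - u r) - 1" for r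
  have wb: "norm (w r) \<le> 2 * (B / real r ^ 2)" if r: "r \<in> T" for r
  proof -
    have n1: "norm (1 - u r) \<ge> 1/2"
      using uh[OF r] norm_triangle_ineq2[of 1 "u r"] by simp
    then have nz: "1 - u r \<noteq> 0" by auto
    have "w r = u r / (1 - u r)" unfolding w_def using nz by (simp add: field_simps)
    then have "norm (w r) = norm (u r) / norm (1 - u r)" by (simp add: norm_divide)
    also have "\<dots> \<le> norm (u r) / (1/2)"
      using n1 by (intro divide_left_mono) auto
    also have "\<dots> \<le> 2 * (B / real r ^ 2)" using ub[OF r] by simp
    finally show ?thesis .
  qed
  have "(\<Prod>r\<in>T. inverse (1 - u r)) = (\<Prod>r\<in>T. 1 + w r)" unfolding w_def by simp
  then have "norm ((\<Prod>r\<in>T. inverse (1 - u r)) - 1) \<le> (\<Prod>r\<in>T. 1 + norm (w r)) - 1"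
    using norm_prod_minus1_le_prod_minus1[of w T] by simp
  also have "(\<Prod>r\<in>T. 1 + norm (w r)) \<le> (\<Prod>r\<in>T. exp (norm (w r)))"
    by (intro prod_mono) auto
  also have "\<dots> = exp (\<Sum>r\<in>T. norm (w r))" using finT by (simp add: exp_sum)
  also have "(\<Sum>r\<in>T. norm (w r)) \<le> (\<Sum>r\<in>T. 2 * (B / real r ^ 2))"
    using wb by (intro sum_mono) auto
  also have "\<dots> = 2 * B * (\<Sum>r\<in>T. 1 / real r ^ 2)"
    by (simp add: sum_distrib_left)
  also have "\<dots> \<le> 2 * B * Z" using Zb B0 by (intro mult_left_mono) auto
  finally have "norm ((\<Prod>r\<in>T. inverse (1 - u r)) - 1) \<le> exp (2 * B * Z) - 1"
    by (smt (verit) exp_le_cancel_iff)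
  also have "exp (2 * B * Z) \<le> 1 + 2 * (2 * B * Z)"
  proof (rule real_exp_bound_lemma)
    have "(\<Sum>r\<in>T. 1 / real r ^ 2) \<ge> 0" by (intro sum_nonneg) auto
    then show "0 \<le> 2 * B * Z" using Zb B0 by auto
  qed (use BZ in auto)
  finally show ?thesis by simp
qed

lemma E_expand:
  fixes F :: "nat set" and c :: "nat \<Rightarrow> nat \<Rightarrow> complex" and m N :: nat
  assumes finF: "finite F"
  shows "(\<Prod>r\<in>F. 1 - (\<Sum>l=1..N. c l r * (1 / of_nat r ^ m) ^ l))
       = (\<Sum>k\<in>PiE F (\<lambda>_. {0..N}). (\<Prod>r\<in>F. (if k r = 0 then 1 else - c (k r) r))
              / of_nat (\<Prod>r\<in>F. r ^ k r) ^ m)"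
proof -
  define \<pi> where "\<pi> r l = (if l = 0 then 1 else - c l r)" for r l
  have fac: "1 - (\<Sum>l=1..N. c l r * (1 / of_nat r ^ m) ^ l)
      = (\<Sum>l\<in>{0..N}. \<pi> r l * (1 / of_nat r ^ m) ^ l)" for r
  proof -
    have "{0..N} = insert 0 {1..N}" by auto
    then have "(\<Sum>l\<in>{0..N}. \<pi> r l * (1 / of_nat r ^ m :: complex) ^ l)
        = 1 + (\<Sum>l\<in>{1..N}. \<pi> r l * (1 / of_nat r ^ m) ^ l)"
      by (simp add: \<pi>_def)
    also have "(\<Sum>l\<in>{1..N}. \<pi> r l * (1 / of_nat r ^ m :: complex) ^ l)
        = - (\<Sum>l=1..N. c l r * (1 / of_nat r ^ m) ^ l)"
      unfolding \<pi>_def by (simp add: sum_negf[symmetric])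
    finally show ?thesis by simp
  qed
  have "(\<Prod>r\<in>F. 1 - (\<Sum>l=1..N. c l r * (1 / of_nat r ^ m) ^ l))
      = (\<Prod>r\<in>F. \<Sum>l\<in>{0..N}. \<pi> r l * (1 / of_nat r ^ m) ^ l)"
    using fac by simp
  also have "\<dots> = (\<Sum>k\<in>PiE F (\<lambda>_. {0..N}). \<Prod>r\<in>F. \<pi> r (k r) * (1 / of_nat r ^ m) ^ (k r))"
    by (rule prod_sum_PiE) (use finF in auto)
  also have "\<dots> = (\<Sum>k\<in>PiE F (\<lambda>_. {0..N}). (\<Prod>r\<in>F. \<pi> r (k r)) / of_nat (\<Prod>r\<in>F. r ^ k r) ^ m)"
  proof (rule sum.cong[OF refl])
    fix k
    have "(\<Prod>r\<in>F. \<pi> r (k r) * (1 / of_nat r ^ m :: complex) ^ (k r))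
        = (\<Prod>r\<in>F. \<pi> r (k r)) * (\<Prod>r\<in>F. (1 / of_nat r ^ m :: complex) ^ (k r))"
      by (rule prod.distrib)
    also have "(\<Prod>r\<in>F. (1 / of_nat r ^ m :: complex) ^ (k r)) = (\<Prod>r\<in>F. 1 / (of_nat r ^ k r) ^ m)"
      by (intro prod.cong refl) (simp add: power_one_over power_mult[symmetric] mult.commute)
    also have "\<dots> = 1 / (\<Prod>r\<in>F. (of_nat r ^ k r)) ^ m"
      by (simp add: prod_dividef prod_power_distrib)
    also have "(\<Prod>r\<in>F. (of_nat r ^ k r :: complex)) = of_nat (\<Prod>r\<in>F. r ^ k r)" by simp
    finally show "(\<Prod>r\<in>F. \<pi> r (k r) * (1 / of_nat r ^ m) ^ (k r))
        = (\<Prod>r\<in>F. \<pi> r (k r)) / of_nat (\<Prod>r\<in>F. r ^ k r) ^ m" by simp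
  qed
  finally show ?thesis unfolding \<pi>_def .
qed

lemma L_trunc:
  fixes a :: "nat \<Rightarrow> complex" and M m :: nat
  assumes summ: "summable (\<lambda>n. norm (a (Suc n) / of_nat (Suc n) ^ 2))" and m: "m \<ge> 2"
  shows "norm ((\<Sum>n. a (Suc n) / of_nat (Suc n) ^ m) - (\<Sum>j=1..M. a j / of_nat j ^ m))
        \<le> (\<Sum>n. norm (a (Suc n) / of_nat (Suc n) ^ 2)) * (real M + 1) ^ 2 / (real M + 1) ^ m"
proof -
  define q where "q = real M + 1"
  have q1: "q \<ge> 1" unfolding q_def by simp
  define f where "f n = a (Suc n) / of_nat (Suc n) ^ m" for n
  define f2 where "f2 n = norm (a (Suc n) / of_nat (Suc n) ^ 2)" for n
  have fb: "norm (f n) \<le> f2 n" for n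
  proof -
    have "norm (f n) = norm (a (Suc n)) / real (Suc n) ^ m" unfolding f_def by (simp del: of_nat_Suc add: norm_divide norm_power)
    also have "\<dots> \<le> norm (a (Suc n)) / real (Suc n) ^ 2"
      using m by (intro divide_left_mono power_increasing) auto
    finally show ?thesis unfolding f2_def by (simp del: of_nat_Suc add: norm_divide norm_power)
  qed
  have sf: "summable (\<lambda>n. norm (f n))"
    by (rule summable_comparison_test[OF _ summ]) (use fb f2_def in auto)
  have sf': "summable f" using summable_norm_cancel[OF sf] .
  have split: "suminf f = (\<Sum>n. f (n + M)) + (\<Sum>i<M. f i)"
    by (rule suminf_split_initial_segment[OF sf'])
  have fin: "(\<Sum>j=1..M. a j / of_nat j ^ m) = (\<Sum>i<M. f i)"
    unfolding f_def using sum.atLeast1_atMost_eq[of "\<lambda>j. a j / of_nat j ^ m" M] by (simp del: of_nat_Suc)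
  have fbt: "norm (f (n + M)) \<le> f2 (n + M) * (q ^ 2 / q ^ m)" for n
  proof -
    have qle: "q \<le> real (Suc (n + M))" unfolding q_def by simp
    have "norm (f (n + M)) = norm (a (Suc (n + M))) / real (Suc (n + M)) ^ 2 / real (Suc (n + M)) ^ (m - 2)"
    proof -
      have pw: "real (Suc (n + M)) ^ m = real (Suc (n + M)) ^ 2 * real (Suc (n + M)) ^ (m - 2)"
        by (metis le_add_diff_inverse m power_add)
      show ?thesis unfolding f_def by (simp del: of_nat_Suc add: norm_divide norm_power pw)
    qed
    also have "\<dots> \<le> norm (a (Suc (n + M))) / real (Suc (n + M)) ^ 2 / q ^ (m - 2)"
      using qle q1 by (intro divide_left_mono power_mono mult_pos_pos) auto
    also have "q ^ (m - 2) = q ^ m / q ^ 2" using m q1 by (simp add: power_diff)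
    finally show ?thesis unfolding f2_def by (simp del: of_nat_Suc add: norm_divide norm_power)
  qed
  have s2: "summable (\<lambda>n. f2 (n + M))" using summ unfolding f2_def by (rule summable_ignore_initial_segment)
  have "norm (\<Sum>n. f (n + M)) \<le> (\<Sum>n. norm (f (n + M)))"
    by (rule summable_norm) (use summable_ignore_initial_segment[OF sf] in auto)
  also have "\<dots> \<le> (\<Sum>n. f2 (n + M) * (q ^ 2 / q ^ m))"
    by (rule suminf_le) (use fbt summable_ignore_initial_segment[OF sf] s2 in \<open>auto intro: summable_mult2\<close>)
  also have "\<dots> = (\<Sum>n. f2 (n + M)) * (q ^ 2 / q ^ m)" by (rule suminf_mult2[symmetric]) (rule s2)
  also have "(\<Sum>n. f2 (n + M)) \<le> (\<Sum>n. f2 n)"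
  proof -
    have "(\<Sum>n. f2 n) = (\<Sum>n. f2 (n + M)) + (\<Sum>i<M. f2 i)"
      by (rule suminf_split_initial_segment) (use summ f2_def in auto)
    moreover have "(\<Sum>i<M. f2 i) \<ge> 0" unfolding f2_def by (intro sum_nonneg) auto
    ultimately show ?thesis by simp
  qed
  then have "(\<Sum>n. f2 (n + M)) * (q ^ 2 / q ^ m) \<le> (\<Sum>n. f2 n) * (q ^ 2 / q ^ m)"
    using q1 by (intro mult_right_mono) auto
  finally have "norm (\<Sum>n. f (n + M)) \<le> (\<Sum>n. f2 n) * (q ^ 2 / q ^ m)" .
  moreover have "(\<Sum>n. a (Suc n) / of_nat (Suc n) ^ m) - (\<Sum>j=1..M. a j / of_nat j ^ m) = (\<Sum>n. f (n + M))"
    using split fin unfolding f_def by simp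
  ultimately show ?thesis unfolding f2_def q_def by simp
qed

lemma powr_neg_nat_complex:
  fixes r m :: nat
  assumes "r > 0"
  shows "(of_nat r :: complex) powr (- of_nat m) = 1 / of_nat r ^ m"
  using assms by (simp only: powr_minus_divide powr_nat') simp

lemma local_factor:
  fixes a :: "nat \<Rightarrow> complex" and c :: "nat \<Rightarrow> nat \<Rightarrow> complex" and N p :: nat
  assumes S1: "\<forall>s. Re s > 1 \<longrightarrow> summable (\<lambda>n. norm (a (Suc n) * of_nat (Suc n) powr (- s)))"
    and Lnz: "\<forall>s. Re s > 1 \<longrightarrow> dirichlet_L a s \<noteq> 0"
    and ep: "\<forall>s. Re s > 1 \<longrightarrow> (\<lambda>x. \<Prod>p\<in>{p::nat. prime p \<and> p \<le> x}.
               inverse (1 - (\<Sum>l=1..N. c l p * (of_nat p powr (- s)) ^ l))) \<longlonglongrightarrow> dirichlet_L a s"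
    and N2: "N \<ge> 2" and pp: "prime p"
  shows "a 1 = 1 \<and> c 1 p = a p \<and> c 2 p = a (p^2) - a p * c 1 p"
proof -
  define M where "M = p ^ 2"
  define q where "q = real M + 1"
  define F where "F = {r. prime r \<and> r \<le> M}"
  define KS where "KS = PiE F (\<lambda>_. {0..N})"
  define u where "u r m = (\<Sum>l=1..N. c l r * (1 / of_nat r ^ m) ^ l)" for r m :: nat
  define Lm where "Lm m = dirichlet_L a (of_nat m)" for m :: nat
  define E where "E m = (\<Prod>r\<in>F. 1 - u r m)" for m :: nat
  define e where "e k = (\<Prod>r\<in>F. (if k r = 0 then 1 else - c (k r) r))" for k :: "nat \<Rightarrow> nat"
  define \<nu> where "\<nu> k = (\<Prod>r\<in>F. r ^ k r)" for k :: "nat \<Rightarrow> nat"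
  define J where "J = {1..M} \<times> KS"
  define \<nu>' where "\<nu>' j = fst j * \<nu> (snd j)" for j :: "nat \<times> (nat \<Rightarrow> nat)"
  define g where "g j = a (fst j) * e (snd j)" for j :: "nat \<times> (nat \<Rightarrow> nat)"
  define P where "P x m = (\<Prod>r\<in>{r::nat. prime r \<and> r \<le> x}. inverse (1 - u r m))" for x m :: nat
  have finF: "finite F" unfolding F_def by auto
  have prF: "\<And>r. r \<in> F \<Longrightarrow> prime r" unfolding F_def by auto
  have pF: "p \<in> F" unfolding F_def M_def using pp prime_ge_1_nat[OF pp] by (auto simp: power2_eq_square)
  have p2: "p \<ge> 2" using pp by (simp add: prime_ge_2_nat)
  have M4: "M \<ge> 4" unfolding M_def using power_mono[OF p2, of 2] by simp
  have q1: "q > 1" unfolding q_def using M4 by simp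
  have finKS: "finite KS" unfolding KS_def using finF by (auto intro: finite_PiE)
  have finJ: "finite J" unfolding J_def using finKS by auto

  have Lm_eq: "Lm m = (\<Sum>n. a (Suc n) / of_nat (Suc n) ^ m)" for m
    unfolding Lm_def dirichlet_L_def
    by (intro suminf_cong) (simp del: of_nat_Suc add: powr_neg_nat_complex divide_inverse)
  have epm: "(\<lambda>x. P x m) \<longlonglongrightarrow> Lm m" if m: "m \<ge> 2" for m
  proof -
    have "Re (of_nat m :: complex) > 1" using m by simp
    with ep have lim: "(\<lambda>x. \<Prod>p\<in>{p::nat. prime p \<and> p \<le> x}.
               inverse (1 - (\<Sum>l=1..N. c l p * (of_nat p powr (- of_nat m)) ^ l))) \<longlonglongrightarrow> Lm m"
      unfolding Lm_def by blast
    have "(\<lambda>x. \<Prod>p\<in>{p::nat. prime p \<and> p \<le> x}.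
               inverse (1 - (\<Sum>l=1..N. c l p * (of_nat p powr (- of_nat m)) ^ l))) = (\<lambda>x. P x m)"
      unfolding P_def u_def
      by (intro ext prod.cong refl) (auto simp: powr_neg_nat_complex prime_gt_0_nat)
    with lim show ?thesis by simp
  qed
  have nzm: "1 - u r m \<noteq> 0" if r: "prime r" and m: "m \<ge> 2" for r m
  proof -
    have Re: "Re (of_nat m :: complex) > 1" using m by simp
    have "1 - (\<Sum>l=1..N. c l r * (of_nat r powr (- of_nat m)) ^ l) \<noteq> 0"
      by (rule euler_factor_nz[OF _ _ r, where L="dirichlet_L a (of_nat m)"]) (use ep Lnz Re in auto)
    then show ?thesis unfolding u_def using r by (simp add: powr_neg_nat_complex prime_gt_0_nat)
  qed
  have cb: "norm (c l r) \<le> (1 + real r) ^ N" if r: "prime r" and l: "l \<in> {1..N}" for r l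
  proof (rule coeff_bound_from_disk[OF _ _ l])
    fix z :: complex assume z: "norm z < 1 / real r"
    show "1 - (\<Sum>l=1..N. c l r * z ^ l) \<noteq> 0"
    proof (rule factor_nz_disk[OF _ r z])
      fix s :: complex assume Re: "Re s > 1"
      show "1 - (\<Sum>l=1..N. c l r * (of_nat r powr (- s)) ^ l) \<noteq> 0"
        by (rule euler_factor_nz[OF _ _ r, where L="dirichlet_L a s"]) (use ep Lnz Re in auto)
    qed
  qed (use r prime_gt_0_nat in auto)
  define K0 where "K0 = real N * 2 ^ N"
  have K0: "K0 \<ge> 0" unfolding K0_def by simp
  have ub: "norm (u r m) \<le> K0 * real r ^ N / real r ^ m" if r: "prime r" and m: "m \<ge> 1" for r m
  proof -
    have r1: "real r \<ge> 1" using prime_ge_1_nat[OF r] by simp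
    have "norm (u r m) \<le> (\<Sum>l=1..N. norm (c l r * (1 / of_nat r ^ m) ^ l))"
      unfolding u_def by (rule norm_sum)
    also have "\<dots> \<le> (\<Sum>l=1..N. (1 + real r) ^ N * (1 / real r ^ m))"
    proof (rule sum_mono)
      fix l assume l: "l \<in> {1..N}"
      have "norm ((1 / of_nat r ^ m :: complex) ^ l) = (1 / real r ^ m) ^ l"
        by (simp add: norm_power norm_divide)
      also have "\<dots> \<le> (1 / real r ^ m) ^ 1"
        using l r1 by (intro power_decreasing) (auto simp: divide_simps)
      finally have "norm ((1 / of_nat r ^ m :: complex) ^ l) \<le> 1 / real r ^ m" by simp
      then show "norm (c l r * (1 / of_nat r ^ m) ^ l) \<le> (1 + real r) ^ N * (1 / real r ^ m)"
        unfolding norm_mult using cb[OF r l] by (intro mult_mono) auto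
    qed
    also have "\<dots> = real N * (1 + real r) ^ N / real r ^ m" by simp
    also have "\<dots> \<le> real N * (2 * real r) ^ N / real r ^ m"
      using r1 by (intro divide_right_mono mult_left_mono power_mono) auto
    also have "\<dots> = K0 * real r ^ N / real r ^ m" unfolding K0_def by (simp add: power_mult_distrib)
    finally show ?thesis .
  qed
  define Z2 where "Z2 = (\<Sum>n. inverse (real n ^ 2))"
  have sZ2: "summable (\<lambda>n. inverse (real n ^ 2))" using inverse_power_summable[of 2] by simp
  define B where "B m = K0 * q ^ (N + 2) / q ^ m" for m :: nat
  have B0: "B m \<ge> 0" for m unfolding B_def using K0 q1 by simp
  have ubT: "norm (u r m) \<le> B m / real r ^ 2" if r: "prime r" "r > M" and m: "m \<ge> N + 2" for r m
  proof -
    have rq: "real r \<ge> q" using r unfolding q_def by simp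
    have r1: "real r > 0" using rq q1 by simp
    have mm: "m = (N + 2) + (m - N - 2)" using m by simp
    have e1: "real r ^ m = real r ^ N * real r ^ 2 * real r ^ (m - N - 2)"
      by (subst mm) (simp only: power_add)
    have e2: "q ^ m = q ^ (N + 2) * q ^ (m - N - 2)"
      by (subst mm) (simp only: power_add)
    have "norm (u r m) \<le> K0 * real r ^ N / real r ^ m" using ub[OF r(1)] m by simp
    also have "\<dots> = K0 / (real r ^ 2 * real r ^ (m - N - 2))" using r1 unfolding e1 by (simp add: field_simps)
    also have "\<dots> \<le> K0 / (real r ^ 2 * q ^ (m - N - 2))"
      using rq q1 r1 K0 by (intro divide_left_mono mult_left_mono power_mono mult_pos_pos) auto
    also have "\<dots> = B m / real r ^ 2" unfolding B_def e2 using q1 r1 by (simp add: field_simps)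
    finally show ?thesis .
  qed
  have B_lim: "B \<longlonglongrightarrow> 0"
  proof -
    have "(\<lambda>m. K0 * q ^ (N + 2) * (1 / q) ^ m) \<longlonglongrightarrow> K0 * q ^ (N + 2) * 0"
      by (intro tendsto_intros LIMSEQ_power_zero) (use q1 in auto)
    moreover have "B = (\<lambda>m. K0 * q ^ (N + 2) * (1 / q) ^ m)"
      unfolding B_def by (auto simp: power_one_over divide_inverse power_inverse)
    ultimately show ?thesis by simp
  qed
  have evB: "eventually (\<lambda>m. B m \<le> 1/2 \<and> 2 * B m * Z2 \<le> 1/2 \<and> m \<ge> N + 2) sequentially"
  proof -
    have "(\<lambda>m. 2 * B m * Z2) \<longlonglongrightarrow> 2 * 0 * Z2" by (intro tendsto_intros B_lim)
    then have "eventually (\<lambda>m. 2 * B m * Z2 < 1/2) sequentially" by (intro order_tendstoD) auto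
    moreover have "eventually (\<lambda>m. B m < 1/2) sequentially" using B_lim by (intro order_tendstoD) auto
    moreover have "eventually (\<lambda>m. m \<ge> N + 2) sequentially" by (rule eventually_ge_at_top)
    ultimately show ?thesis by eventually_elim auto
  qed
  have tail: "norm (E m * Lm m - 1) \<le> 4 * B m * Z2"
    if mB: "B m \<le> 1/2" "2 * B m * Z2 \<le> 1/2" "m \<ge> N + 2" for m
  proof -
    have m2: "m \<ge> 2" using mB by simp
    have bx: "norm (E m * P x m - 1) \<le> 4 * B m * Z2" if x: "x \<ge> M" for x
    proof -
      define T where "T = {r. prime r \<and> M < r \<and> r \<le> x}"
      have finT: "finite T" unfolding T_def by auto
      have un: "{r. prime r \<and> r \<le> x} = F \<union> T" "F \<inter> T = {}" using x unfolding F_def T_def by auto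
      have "P x m = (\<Prod>r\<in>F. inverse (1 - u r m)) * (\<Prod>r\<in>T. inverse (1 - u r m))"
        unfolding P_def un(1) using finF finT un(2) by (rule prod.union_disjoint)
      moreover have "E m * (\<Prod>r\<in>F. inverse (1 - u r m)) = 1"
      proof -
        have "E m * (\<Prod>r\<in>F. inverse (1 - u r m)) = (\<Prod>r\<in>F. (1 - u r m) * inverse (1 - u r m))"
          unfolding E_def by (simp add: prod.distrib)
        also have "\<dots> = 1" using nzm[OF prF m2] by (intro prod.neutral) auto
        finally show ?thesis .
      qed
      ultimately have eq: "E m * P x m = (\<Prod>r\<in>T. inverse (1 - u r m))" by (simp add: mult.assoc[symmetric])
      have "norm ((\<Prod>r\<in>T. inverse (1 - u r m)) - 1) \<le> 4 * B m * Z2"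
      proof (rule tail_prod_bound[OF finT])
        fix r assume r: "r \<in> T"
        then show ubr: "norm (u r m) \<le> B m / real r ^ 2" using ubT[OF _ _ mB(3)] unfolding T_def by auto
        have "real r ^ 2 \<ge> 1" using r unfolding T_def by simp
        then have "B m / real r ^ 2 \<le> B m" using B0[of m] by (simp add: divide_le_eq mult_le_cancel_left1 order_trans)
        then show "norm (u r m) \<le> 1/2" using ubr mB(1) by linarith
      next
        have "(\<Sum>r\<in>T. 1 / real r ^ 2) = (\<Sum>r\<in>T. inverse (real r ^ 2))" by (simp add: divide_inverse)
        also have "\<dots> \<le> Z2" unfolding Z2_def by (rule sum_le_suminf[OF sZ2 finT]) auto
        finally show "(\<Sum>r\<in>T. 1 / real r ^ 2) \<le> Z2" .
      qed (use B0 mB in auto)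
      then show ?thesis using eq by simp
    qed
    have "(\<lambda>x. norm (E m * P x m - 1)) \<longlonglongrightarrow> norm (E m * Lm m - 1)"
      by (intro tendsto_intros epm m2)
    moreover have "eventually (\<lambda>x. norm (E m * P x m - 1) \<le> 4 * B m * Z2) sequentially"
      unfolding eventually_sequentially using bx by blast
    ultimately show ?thesis by (rule tendsto_upperbound) simp
  qed
  define Za where "Za = (\<Sum>n. norm (a (Suc n) / of_nat (Suc n) ^ 2))"
  have sZa: "summable (\<lambda>n. norm (a (Suc n) / of_nat (Suc n) ^ 2))"
  proof -
    have "Re (of_nat 2 :: complex) > 1" by simp
    with S1 have "summable (\<lambda>n. norm (a (Suc n) * of_nat (Suc n) powr (- of_nat 2)))" by blast
    then show ?thesis by (simp only: powr_neg_nat_complex[OF zero_less_Suc]) (simp add: divide_inverse)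
  qed
  have trunc: "norm (Lm m - (\<Sum>j=1..M. a j / of_nat j ^ m)) \<le> Za * q ^ 2 / q ^ m" if "m \<ge> 2" for m
    using L_trunc[OF sZa that, of M] unfolding Lm_eq q_def Za_def by simp
  have Eexp: "E m = (\<Sum>k\<in>KS. e k / of_nat (\<nu> k) ^ m)" for m
    unfolding E_def u_def KS_def e_def \<nu>_def by (rule E_expand[OF finF])
  have nupos: "\<nu> k > 0" for k
    unfolding \<nu>_def using prF by (intro prod_pos) (auto simp: prime_gt_0_nat)
  define Ke where "Ke = (\<Sum>k\<in>KS. norm (e k))"
  have Ke0: "Ke \<ge> 0" unfolding Ke_def by (intro sum_nonneg) auto
  have Ebound: "norm (E m) \<le> Ke" for m
  proof -
    have "norm (E m) \<le> (\<Sum>k\<in>KS. norm (e k / of_nat (\<nu> k) ^ m))" unfolding Eexp by (rule norm_sum)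
    also have "\<dots> \<le> Ke" unfolding Ke_def
    proof (rule sum_mono)
      fix k
      have "real (\<nu> k) ^ m \<ge> 1" using nupos[of k] by (simp add: one_le_power)
      then show "norm (e k / of_nat (\<nu> k) ^ m) \<le> norm (e k)"
        by (simp add: norm_divide norm_power divide_le_eq mult_le_cancel_left1 order_trans)
    qed
    finally show ?thesis .
  qed
  have prodf: "(\<Sum>j\<in>J. g j / of_nat (\<nu>' j) ^ m) = E m * (\<Sum>j=1..M. a j / of_nat j ^ m)" for m
  proof -
    have "E m * (\<Sum>j=1..M. a j / of_nat j ^ m) = (\<Sum>j=1..M. a j / of_nat j ^ m) * (\<Sum>k\<in>KS. e k / of_nat (\<nu> k) ^ m)"
      unfolding Eexp by (simp add: mult.commute)
    also have "\<dots> = (\<Sum>j\<in>{1..M}. \<Sum>k\<in>KS. a j / of_nat j ^ m * (e k / of_nat (\<nu> k) ^ m))"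
      by (rule sum_product)
    also have "\<dots> = (\<Sum>(j,k)\<in>{1..M} \<times> KS. a j / of_nat j ^ m * (e k / of_nat (\<nu> k) ^ m))"
      by (rule sum.cartesian_product)
    also have "\<dots> = (\<Sum>j\<in>J. g j / of_nat (\<nu>' j) ^ m)"
      unfolding J_def g_def \<nu>'_def
      by (intro sum.cong refl) (auto simp: power_mult_distrib)
    finally show ?thesis by simp
  qed
  define Kt where "Kt = 4 * K0 * q ^ (N + 2) * Z2 + Ke * Za * q ^ 2"
  have bnd: "norm ((\<Sum>j\<in>J. g j / of_nat (\<nu>' j) ^ m) - 1) \<le> Kt / q ^ m"
    if mB: "B m \<le> 1/2 \<and> 2 * B m * Z2 \<le> 1/2 \<and> m \<ge> N + 2" for m
  proof -
    have m2: "m \<ge> 2" using mB by simp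
    have "(\<Sum>j\<in>J. g j / of_nat (\<nu>' j) ^ m) - 1
        = (E m * Lm m - 1) - E m * (Lm m - (\<Sum>j=1..M. a j / of_nat j ^ m))"
      unfolding prodf by (simp add: right_diff_distrib)
    also have "norm \<dots> \<le> norm (E m * Lm m - 1) + norm (E m) * norm (Lm m - (\<Sum>j=1..M. a j / of_nat j ^ m))"
      by (rule order.trans[OF norm_triangle_ineq4]) (simp add: norm_mult)
    also have "\<dots> \<le> 4 * B m * Z2 + Ke * (Za * q ^ 2 / q ^ m)"
      using tail[of m] mB trunc[OF m2] Ebound[of m] Ke0
      by (intro add_mono mult_mono) auto
    also have "\<dots> = Kt / q ^ m" unfolding Kt_def B_def by (simp add: add_divide_distrib)
    finally show ?thesis .
  qed
  obtain mm where mm: "\<And>m. m \<ge> mm \<Longrightarrow> B m \<le> 1/2 \<and> 2 * B m * Z2 \<le> 1/2 \<and> m \<ge> N + 2"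
    using evB unfolding eventually_sequentially by blast
  have pos: "\<nu>' j > 0" if "j \<in> J" for j
    using that nupos unfolding J_def \<nu>'_def by auto
  have uniq: "(\<Sum>j\<in>{j\<in>J. \<nu>' j = n}. g j) = (if n = 1 then 1 else 0)" if "1 \<le> n" "n \<le> M" for n
    by (rule dirichlet_poly_unique_gen[OF finJ pos _ bnd[OF mm] that])
       (auto simp: q_def)
  define kk where "kk t = (\<lambda>r. if r \<in> F then (if r = p then t else 0) else undefined)" for t :: nat
  have ekk: "e (kk t) = (if t = 0 then 1 else - c t p)" for t
  proof -
    have "e (kk t) = (\<Prod>r\<in>F. if r = p then (if t = 0 then 1 else - c t p) else 1)"
      unfolding e_def kk_def by (intro prod.cong refl) auto
    also have "\<dots> = (if t = 0 then 1 else - c t p)" using finF pF by (simp add: prod.delta)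
    finally show ?thesis .
  qed
  have fib: "(\<Sum>j\<in>{j\<in>J. \<nu>' j = p ^ i}. g j) = (\<Sum>t\<in>{0..i}. a (p ^ (i - t)) * e (kk t))"
    if i: "i \<le> 2" for i
  proof -
    have iN: "i \<le> N" using i N2 by simp
    have iM: "p ^ i \<le> M" unfolding M_def using i p2 by (intro power_increasing) auto
    have "{j\<in>J. \<nu>' j = p ^ i} = (\<lambda>t. (p ^ (i - t), kk t)) ` {0..i}"
      unfolding J_def \<nu>'_def \<nu>_def KS_def kk_def
      by (rule fiber_prime_power[OF finF prF pF iN iM])
    moreover have "inj_on (\<lambda>t. (p ^ (i - t), kk t)) {0..i}"
      unfolding kk_def by (rule kk_inj[OF pF])
    ultimately show ?thesis by (simp add: sum.reindex g_def)
  qed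
  have M1: "1 \<le> M" using M4 by simp
  have pM: "1 \<le> p" "p \<le> M" using pF p2 unfolding F_def by auto
  have i0: "a 1 = 1" using fib[of 0] uniq[OF order.refl M1] by (simp add: ekk)
  have i1: "a p - a 1 * c 1 p = 0"
    using fib[of 1] uniq[OF pM] p2 by (simp add: ekk)
  have i2: "a (p ^ 2) - a p * c 1 p - a 1 * c 2 p = 0"
  proof -
    have "1 \<le> p ^ 2" "p ^ 2 \<le> M" using p2 unfolding M_def by auto
    from uniq[OF this] have "(\<Sum>j\<in>{j\<in>J. \<nu>' j = p ^ 2}. g j) = 0" using p2 by simp
    moreover have "{0..2::nat} = {0, 1, 2}" by auto
    ultimately have "a (p ^ 2) + (- (a p * c 1 p) - a 1 * c 2 p) = 0" using fib[of 2] by (simp add: ekk)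
    then show ?thesis by (simp add: algebra_simps)
  qed
  show ?thesis using i0 i1 i2 by (simp add: algebra_simps)
qed

lemma c2_formula:
  fixes a :: "nat \<Rightarrow> complex"
  assumes sc: "selberg_class a" and ep: "euler_product_rank a N c" and N2: "N \<ge> 2" and pp: "prime p"
  shows "c 2 p = a (p^2) - a p ^ 2"
proof -
  have S1: "\<forall>s. Re s > 1 \<longrightarrow> summable (\<lambda>n. norm (a (Suc n) * of_nat (Suc n) powr (- s)))"
    using sc unfolding selberg_class_def by blast
  have Lnz: "\<forall>s. Re s > 1 \<longrightarrow> dirichlet_L a s \<noteq> 0"
  proof -
    from sc obtain b :: "nat \<Rightarrow> complex" where
      "\<forall>s. Re s > 1 \<longrightarrow> dirichlet_L a s = exp (\<Sum>n. b (Suc n) * of_nat (Suc n) powr (- s))"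
      unfolding selberg_class_def by blast
    then show ?thesis by simp
  qed
  have epl: "\<forall>s. Re s > 1 \<longrightarrow> (\<lambda>x. \<Prod>p\<in>{p::nat. prime p \<and> p \<le> x}.
               inverse (1 - (\<Sum>l=1..N. c l p * (of_nat p powr (- s)) ^ l))) \<longlonglongrightarrow> dirichlet_L a s"
    using ep unfolding euler_product_rank_def by blast
  from local_factor[OF S1 Lnz epl N2 pp] show ?thesis by (simp add: power2_eq_square)
qed

lemma c2_bound:
  fixes a :: "nat \<Rightarrow> complex"
  assumes sc: "selberg_class a" and ep: "euler_product_rank a N c" and N2: "N \<ge> 2" and d: "\<delta> > 0"
  shows "\<exists>C\<ge>0. \<forall>p. prime p \<longrightarrow> norm (c 2 p) \<le> C * real p powr \<delta>"
proof -
  have S4: "\<forall>\<epsilon>>0. \<exists>C. \<forall>n\<ge>1. norm (a n) \<le> C * real n powr \<epsilon>"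
    using sc unfolding selberg_class_def by blast
  obtain C where C: "\<And>n. n \<ge> 1 \<Longrightarrow> norm (a n) \<le> C * real n powr (\<delta> / 2)"
    using S4 d by (meson half_gt_zero)
  have "norm (a 1) \<le> C" using C[of 1] by simp
  then have C0: "C \<ge> 0" using norm_ge_zero order_trans by blast
  show ?thesis
  proof (intro exI[of _ "C + C^2"] conjI allI impI)
    show "C + C^2 \<ge> 0" using C0 by simp
    fix p :: nat assume pp: "prime p"
    have p1: "p \<ge> 1" using prime_ge_1_nat[OF pp] .
    have rp: "real p > 0" using p1 by simp
    have "norm (c 2 p) \<le> norm (a (p^2)) + norm (a p) ^ 2"
      unfolding c2_formula[OF sc ep N2 pp] by (metis norm_power norm_triangle_ineq4)
    also have "norm (a (p^2)) \<le> C * real p powr \<delta>"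
    proof -
      have "norm (a (p^2)) \<le> C * real (p^2) powr (\<delta>/2)" using C[of "p^2"] p1 by simp
      also have "real (p^2) powr (\<delta>/2) = real p powr \<delta>"
        using rp by (simp add: powr_mult powr_add[symmetric] power2_eq_square)
      finally show ?thesis .
    qed
    also have "norm (a p) ^ 2 \<le> (C * real p powr (\<delta>/2)) ^ 2"
      using C[OF p1] by (intro power_mono) auto
    also have "(C * real p powr (\<delta>/2)) ^ 2 = C^2 * real p powr \<delta>"
      using rp by (simp add: power_mult_distrib powr_realpow[symmetric] powr_powr)
    finally show "norm (c 2 p) \<le> (C + C^2) * real p powr \<delta>" by (simp add: algebra_simps)
  qed
qed

lemma bounded_on_interval:
  fixes f :: "real \<Rightarrow> complex"
  assumes "\<And>y. y \<in> {u..v} \<Longrightarrow> isCont f y"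
  shows "\<exists>H\<ge>0. \<forall>y\<in>{u..v}. norm (f y) \<le> H"
proof -
  have "continuous_on {u..v} f" using assms by (intro continuous_at_imp_continuous_on) auto
  then have "compact (f ` {u..v})" by (intro compact_continuous_image) auto
  then have "bounded (f ` {u..v})" by (rule compact_imp_bounded)
  then obtain B where B: "\<And>z. z \<in> f ` {u..v} \<Longrightarrow> norm z \<le> B" unfolding bounded_iff by blast
  show ?thesis by (rule exI[of _ "max B 0"]) (use B in \<open>fastforce\<close>)
qed

lemma h_facts:
  assumes "C0inf h"
  shows "\<exists>\<alpha> \<beta>. 0 < \<alpha> \<and> \<alpha> \<le> \<beta> \<and> (\<forall>y>0. y \<notin> {\<alpha>..\<beta>} \<longrightarrow> h y = 0)
     \<and> (\<forall>y>0. isCont h y)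
     \<and> (\<forall>y>0. (h has_vector_derivative vector_derivative h (at y)) (at y))
     \<and> (\<forall>y>0. isCont (\<lambda>y. vector_derivative h (at y)) y)"
proof -
  from assms obtain \<alpha> \<beta> where ab: "0 < \<alpha>" "\<alpha> \<le> \<beta>" "\<forall>y>0. y \<notin> {\<alpha>..\<beta>} \<longrightarrow> h y = 0"
    and sm: "smooth_on {0<..} h" unfolding C0inf_def by blast
  have d0: "h differentiable (at y)" if "y > 0" for y
    using sm that unfolding smooth_on_def vderiv_iter_def by (metis greaterThan_iff funpow_0)
  have d1: "(\<lambda>y. vector_derivative h (at y)) differentiable (at y)" if "y > 0" for y
  proof -
    have "vderiv_iter 1 h differentiable (at y)" using sm that unfolding smooth_on_def by auto
    then show ?thesis unfolding vderiv_iter_def by simp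
  qed
  have c0: "\<forall>y>0. isCont h y" using d0 differentiable_imp_continuous_within by blast
  have c1: "\<forall>y>0. isCont (\<lambda>y. vector_derivative h (at y)) y"
    using d1 differentiable_imp_continuous_within by blast
  have v: "\<forall>y>0. (h has_vector_derivative vector_derivative h (at y)) (at y)"
    using d0 vector_derivative_works by blast
  show ?thesis using ab c0 c1 v by blast
qed

lemma ln_le_powr_div:
  fixes x e :: real
  assumes "x \<ge> 1" "e > 0"
  shows "ln x \<le> x powr e / e"
proof -
  have "ln (x powr e) \<le> x powr e - 1" by (rule ln_le_minus_one) (use assms in simp)
  then have "e * ln x \<le> x powr e" using assms by simp
  then show ?thesis using assms by (simp add: field_simps)
qed

lemma part1:
  fixes c :: "nat \<Rightarrow> nat \<Rightarrow> complex" and a :: "nat \<Rightarrow> complex"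
  assumes sc: "selberg_class a" and ep: "euler_product_rank a N c" and N2: "N \<ge> 2"
    and hC: "C0inf h" and eps: "\<epsilon> > 0"
  shows "S2tilde c N h \<in> O[at_right 0](\<lambda>x. of_real (x powr (-1/2 - \<epsilon>)))"
proof -
  obtain \<alpha> \<beta> where ab: "0 < \<alpha>" "\<alpha> \<le> \<beta>" and hz: "\<And>y. y > 0 \<Longrightarrow> y \<notin> {\<alpha>..\<beta>} \<Longrightarrow> h y = 0"
    and hc: "\<And>y. y > 0 \<Longrightarrow> isCont h y"
    using h_facts[OF hC] by blast
  obtain H where H0: "H \<ge> 0" and H: "\<And>y. y \<in> {\<alpha>..\<beta>} \<Longrightarrow> norm (h y) \<le> H"
    using bounded_on_interval[of \<alpha> \<beta> h] hc ab by force
  have Hall: "norm (h y) \<le> H" if "y > 0" for y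
    using H hz[OF that] H0 by (cases "y \<in> {\<alpha>..\<beta>}") auto
  obtain C where C0: "C \<ge> 0" and C: "\<And>p. prime p \<Longrightarrow> norm (c 2 p) \<le> C * real p powr \<epsilon>"
    using c2_bound[OF sc ep N2 eps] by blast
  define K where "K = 2 * (C * H / \<epsilon>) * \<beta> powr (1/2 + \<epsilon>)"
  have bound: "norm (S2tilde c N h x) \<le> K * norm (of_real (x powr (-1/2 - \<epsilon>)) :: complex)"
    if x: "0 < x" "x < \<beta>" for x
  proof -
    define t where "t p = (if prime p \<and> c N p \<noteq> 0 then c 2 p * of_real (ln (real p)) * h (x * (real p) ^ 2) else 0)" for p :: nat
    define R where "R = sqrt (\<beta> / x)"
    have R1: "R \<ge> 1" unfolding R_def using x by simp
    define T where "T = nat \<lfloor>R\<rfloor>"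
    have supp: "real p \<le> R" if "t p \<noteq> 0" for p
    proof -
      have pp: "prime p" and hnz: "h (x * (real p) ^ 2) \<noteq> 0" using that unfolding t_def by (auto split: if_splits)
      have "x * (real p) ^ 2 > 0" using x pp prime_gt_0_nat by simp
      then have "x * (real p) ^ 2 \<le> \<beta>" using hz hnz by fastforce
      then have "(real p) ^ 2 \<le> \<beta> / x" using x by (simp add: field_simps)
      then show ?thesis unfolding R_def by (simp add: real_le_rsqrt)
    qed
    have suppT: "p \<le> T" if "t p \<noteq> 0" for p
      using supp[OF that] unfolding T_def by (simp add: le_nat_floor)
    have S: "S2tilde c N h x = (\<Sum>p\<in>{..T}. t p)"
      unfolding S2tilde_def t_def[symmetric]
      apply (rule suminf_finite)
       apply simp
      using suppT by fastforce
    have tb: "norm (t p) \<le> (C * H / \<epsilon>) * (\<beta> / x) powr \<epsilon>" for p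
    proof (cases "t p = 0")
      case True
      then show ?thesis using C0 H0 eps by simp
    next
      case False
      have pp: "prime p" using False unfolding t_def by (auto split: if_splits)
      have p1: "real p \<ge> 1" using prime_ge_1_nat[OF pp] by simp
      have "norm (t p) \<le> norm (c 2 p) * ln (real p) * H"
        using False Hall[of "x * (real p) ^ 2"] x p1 unfolding t_def
        by (auto simp: norm_mult intro!: mult_mono)
      also have "\<dots> \<le> (C * real p powr \<epsilon>) * (real p powr \<epsilon> / \<epsilon>) * H"
        using C[OF pp] ln_le_powr_div[OF p1 eps] p1 H0 C0 eps
        by (intro mult_mono) auto
      also have "\<dots> = (C * H / \<epsilon>) * (real p ^ 2) powr \<epsilon>"
        using p1 by (simp add: powr_mult power2_eq_square)
      also have "(real p ^ 2) powr \<epsilon> \<le> (\<beta> / x) powr \<epsilon>"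
      proof -
        have "real p \<le> R" by (rule supp[OF False])
        then have "real p ^ 2 \<le> R ^ 2" using p1 by (intro power_mono) auto
        also have "R ^ 2 = \<beta> / x" unfolding R_def using x ab by simp
        finally show ?thesis using p1 eps by (intro powr_mono2) auto
      qed
      then have "(C * H / \<epsilon>) * (real p ^ 2) powr \<epsilon> \<le> (C * H / \<epsilon>) * (\<beta> / x) powr \<epsilon>"
        using C0 H0 eps by (intro mult_left_mono) auto
      finally show ?thesis .
    qed
    have "norm (S2tilde c N h x) \<le> (\<Sum>p\<in>{..T}. norm (t p))" unfolding S by (rule norm_sum)
    also have "\<dots> \<le> (\<Sum>p\<in>{..T}. (C * H / \<epsilon>) * (\<beta> / x) powr \<epsilon>)" by (intro sum_mono tb)
    also have "\<dots> = real (Suc T) * ((C * H / \<epsilon>) * (\<beta> / x) powr \<epsilon>)" by simp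
    also have "\<dots> \<le> (2 * R) * ((C * H / \<epsilon>) * (\<beta> / x) powr \<epsilon>)"
    proof (intro mult_right_mono)
      have "real T \<le> R" unfolding T_def using R1 by linarith
      then show "real (Suc T) \<le> 2 * R" using R1 by simp
    qed (use C0 H0 eps in auto)
    also have "\<dots> = 2 * (C * H / \<epsilon>) * (R * (\<beta> / x) powr \<epsilon>)" by simp
    also have "R * (\<beta> / x) powr \<epsilon> = (\<beta> / x) powr (1/2 + \<epsilon>)"
    proof -
      have y0: "\<beta> / x > 0" using x ab by simp
      have "R = (\<beta> / x) powr (1/2)" unfolding R_def using y0 by (simp add: powr_half_sqrt)
      then show ?thesis by (metis powr_add)
    qed
    also have "(\<beta> / x) powr (1/2 + \<epsilon>) = \<beta> powr (1/2 + \<epsilon>) * x powr (-1/2 - \<epsilon>)"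
    proof -
      have "(\<beta> / x) powr (1/2 + \<epsilon>) = \<beta> powr (1/2 + \<epsilon>) / x powr (1/2 + \<epsilon>)"
        by (rule powr_divide)
      moreover have "x powr (-1/2 - \<epsilon>) = inverse (x powr (1/2 + \<epsilon>))"
      proof -
        have e: "-1/2 - \<epsilon> = -(1/2 + \<epsilon>)" by simp
        show ?thesis unfolding e by (rule powr_minus)
      qed
      ultimately show ?thesis by (metis divide_inverse)
    qed
    finally show ?thesis unfolding K_def using x by (simp add: mult.assoc)
  qed
  show ?thesis
  proof (rule bigoI)
    show "eventually (\<lambda>x. norm (S2tilde c N h x) \<le> K * norm (of_real (x powr (-1/2 - \<epsilon>)) :: complex)) (at_right 0)"
      unfolding eventually_at_right_field using ab bound by (intro exI[of _ \<beta>]) auto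
  qed
qed

lemma abel_identity:
  fixes w :: "nat \<Rightarrow> complex" and g g' :: "real \<Rightarrow> complex" and a0 B :: real and K :: nat
  assumes aB: "a0 \<le> B"
    and deriv: "\<And>t. t \<in> {a0..B} \<Longrightarrow> (g has_vector_derivative g' t) (at t)"
    and gB: "g B = 0" and ga0: "g a0 = 0"
    and small: "\<And>n. n \<le> K \<Longrightarrow> real n < a0 \<Longrightarrow> w n * g (real n) = 0"
    and big: "\<And>n. n \<le> K \<Longrightarrow> real n \<le> B"
  shows "((\<lambda>t. (\<Sum>n\<in>{..K}. if real n \<le> t then w n else 0) * g' t)
          has_integral (- (\<Sum>n\<in>{..K}. w n * g (real n)))) {a0..B}"
proof -
  have one: "((\<lambda>t. (if real n \<le> t then w n else 0) * g' t) has_integral (- (w n * g (real n)))) {a0..B}"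
    if n: "n \<le> K" for n
  proof (cases "real n \<le> a0")
    case True
    have "(g' has_integral (g B - g a0)) {a0..B}"
      by (rule fundamental_theorem_of_calculus[OF aB])
         (use deriv in \<open>auto intro: has_vector_derivative_at_within\<close>)
    then have "((\<lambda>t. w n * g' t) has_integral (w n * (g B - g a0))) {a0..B}"
      by (rule has_integral_mult_right)
    moreover have "w n * (g B - g a0) = - (w n * g (real n))"
    proof (cases "real n < a0")
      case True
      then show ?thesis using small[OF n] gB ga0 by simp
    next
      case False
      then have "real n = a0" using \<open>real n \<le> a0\<close> by simp
      then show ?thesis using gB ga0 by simp
    qed
    ultimately have "((\<lambda>t. w n * g' t) has_integral (- (w n * g (real n)))) {a0..B}" by simp
    then show ?thesis
      by (rule has_integral_eq[rotated]) (use True in auto)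
  next
    case False
    have nB: "real n \<le> B" using big[OF n] .
    have "(g' has_integral (g B - g (real n))) {real n..B}"
      by (rule fundamental_theorem_of_calculus[OF nB])
         (use deriv False in \<open>auto intro: has_vector_derivative_at_within\<close>)
    then have "((\<lambda>t. w n * g' t) has_integral (w n * (g B - g (real n)))) (cbox (real n) B)"
      by (simp add: has_integral_mult_right)
    then have "((\<lambda>t. if t \<in> cbox (real n) B then w n * g' t else 0) has_integral (w n * (g B - g (real n)))) (cbox a0 B)"
      by (rule has_integral_restrict_closed_subinterval) (use False in auto)
    then have "((\<lambda>t. if t \<in> cbox (real n) B then w n * g' t else 0) has_integral (- (w n * g (real n)))) {a0..B}"
      using gB by simp
    then show ?thesis
      by (rule has_integral_eq[rotated]) auto
  qed
  have "((\<lambda>t. \<Sum>n\<in>{..K}. (if real n \<le> t then w n else 0) * g' t) has_integral (\<Sum>n\<in>{..K}. - (w n * g (real n)))) {a0..B}"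
    by (rule has_integral_sum) (use one in auto)
  then show ?thesis by (simp add: sum_distrib_right sum_negf)
qed

lemma powr_real_vderiv:
  fixes \<mu> :: complex and t :: real
  assumes "t > 0"
  shows "((\<lambda>x. of_real x powr \<mu>) has_vector_derivative (\<mu> * of_real t powr (\<mu> - 1))) (at t within S)"
proof -
  have "(of_real t :: complex) \<notin> \<real>\<^sub>\<le>\<^sub>0" using assms by simp
  from has_field_derivative_powr[OF this, of \<mu>]
  show ?thesis by (rule has_vector_derivative_real_field)
qed

lemma ibp_powr:
  fixes g g' :: "real \<Rightarrow> complex" and \<mu> :: complex and a0 B :: real
  assumes a0: "0 < a0" and aB: "a0 \<le> B"
    and deriv: "\<And>t. t \<in> {a0..B} \<Longrightarrow> (g has_vector_derivative g' t) (at t)"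
    and gB: "g B = 0" and ga0: "g a0 = 0"
  shows "((\<lambda>t. of_real t powr \<mu> * g' t) has_integral
           (- \<mu> * integral {a0..B} (\<lambda>t. g t * of_real t powr \<mu> / of_real t))) {a0..B}"
proof -
  define f where "f t = (of_real t powr \<mu> :: complex)" for t
  define f' where "f' t = \<mu> * (of_real t powr \<mu> / of_real t :: complex)" for t
  have fd: "(f has_vector_derivative f' t) (at t within S)" if "t > 0" for t S
  proof -
    have "of_real t powr (\<mu> - 1) = (of_real t powr \<mu> / of_real t :: complex)"
      using that by (simp add: powr_diff)
    then show ?thesis unfolding f_def f'_def using powr_real_vderiv[OF that, of \<mu> S] by simp
  qed
  have Pd: "((\<lambda>t. f t * g t) has_vector_derivative (f t * g' t + f' t * g t)) (at t within {a0..B})"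
    if t: "t \<in> {a0..B}" for t
    using t a0 by (intro has_vector_derivative_mult fd has_vector_derivative_at_within[OF deriv]) auto
  have I1: "((\<lambda>t. f t * g' t + f' t * g t) has_integral (f B * g B - f a0 * g a0)) {a0..B}"
    by (rule fundamental_theorem_of_calculus[OF aB Pd])
  have cont: "continuous_on {a0..B} (\<lambda>t. g t * of_real t powr \<mu> / of_real t)"
  proof (intro continuous_at_imp_continuous_on ballI)
    fix t assume t: "t \<in> {a0..B}"
    then have t0: "t > 0" using a0 by auto
    have "isCont g t" using deriv[OF t] by (rule has_vector_derivative_continuous)
    moreover have "isCont f t" using fd[OF t0, of UNIV] by (rule has_vector_derivative_continuous)
    moreover have "isCont (\<lambda>t. of_real t :: complex) t" by (intro continuous_intros)
    ultimately show "isCont (\<lambda>t. g t * of_real t powr \<mu> / of_real t) t"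
      unfolding f_def using t0 by (intro continuous_intros) auto
  qed
  have I2: "((\<lambda>t. g t * of_real t powr \<mu> / of_real t) has_integral
              integral {a0..B} (\<lambda>t. g t * of_real t powr \<mu> / of_real t)) {a0..B}"
    using integrable_continuous_interval[OF cont] by (rule integrable_integral)
  have I3: "((\<lambda>t. \<mu> * (g t * of_real t powr \<mu> / of_real t)) has_integral
              (\<mu> * integral {a0..B} (\<lambda>t. g t * of_real t powr \<mu> / of_real t))) {a0..B}"
    by (rule has_integral_mult_right[OF I2])
  have "((\<lambda>t. (f t * g' t + f' t * g t) - \<mu> * (g t * of_real t powr \<mu> / of_real t)) has_integral
          ((f B * g B - f a0 * g a0) - \<mu> * integral {a0..B} (\<lambda>t. g t * of_real t powr \<mu> / of_real t))) {a0..B}"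
    by (rule has_integral_diff[OF I1 I3])
  then have "((\<lambda>t. (f t * g' t + f' t * g t) - \<mu> * (g t * of_real t powr \<mu> / of_real t)) has_integral
          (- \<mu> * integral {a0..B} (\<lambda>t. g t * of_real t powr \<mu> / of_real t))) {a0..B}"
    by (simp add: gB ga0)
  then show ?thesis
    by (rule has_integral_eq[rotated]) (auto simp: f_def f'_def algebra_simps)
qed

lemma g_powr_integrable:
  fixes g g' :: "real \<Rightarrow> complex" and \<mu> :: complex and a0 B :: real
  assumes a0: "0 < a0"
    and deriv: "\<And>t. t \<in> {a0..B} \<Longrightarrow> (g has_vector_derivative g' t) (at t)"
  shows "(\<lambda>t. g t * of_real t powr \<mu> / of_real t) integrable_on {a0..B}"
proof (rule integrable_continuous_interval, intro continuous_at_imp_continuous_on ballI)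
  fix t assume t: "t \<in> {a0..B}"
  then have t0: "t > 0" using a0 by auto
  have "isCont g t" using deriv[OF t] by (rule has_vector_derivative_continuous)
  moreover have "isCont (\<lambda>x. of_real x powr \<mu> :: complex) t"
    using powr_real_vderiv[OF t0, of \<mu> UNIV] by (rule has_vector_derivative_continuous)
  ultimately show "isCont (\<lambda>t. g t * of_real t powr \<mu> / of_real t) t"
    using t0 by (intro continuous_intros) auto
qed

lemma rearr: "(x::real) * (P * (Q / Z)) = P * Q * (x / Z)"
  by (simp add: divide_inverse mult_ac)

lemma final_pow:
  fixes x \<beta> R B e :: real
  assumes x: "0 < x" and b: "0 < \<beta>" and R: "R = sqrt (\<beta> / x)" and R1: "1 \<le> R"
    and B0: "0 < B" and BR: "B \<le> 2 * R" and e: "e \<ge> 0"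
  shows "x * (B ^ 2 * B powr e) \<le> 2 powr (2 + e) * \<beta> powr (1 + e / 2) * x powr (- e / 2)"
proof -
  have "B ^ 2 * B powr e = B powr (2 + e)" using B0 by (simp add: powr_add powr_realpow)
  also have "\<dots> \<le> (2 * R) powr (2 + e)" using B0 BR e by (intro powr_mono2) auto
  also have "(2 * R) powr (2 + e) = 2 powr (2 + e) * R powr (2 + e)" using R1 by (simp add: powr_mult)
  also have "R powr (2 + e) = (\<beta> / x) powr (1 + e / 2)"
  proof -
    have "R = (\<beta> / x) powr (1/2)" unfolding R using x b by (simp add: powr_half_sqrt)
    then have "R powr (2 + e) = (\<beta> / x) powr (1/2 * (2 + e))" by (simp add: powr_powr)
    also have "1/2 * (2 + e) = 1 + e / 2" by simp
    finally show ?thesis .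
  qed
  also have "(\<beta> / x) powr (1 + e / 2) = \<beta> powr (1 + e / 2) / x powr (1 + e / 2)"
    by (rule powr_divide)
  finally have A: "x * (B ^ 2 * B powr e) \<le> x * (2 powr (2 + e) * (\<beta> powr (1 + e / 2) / x powr (1 + e / 2)))"
    using x by (intro mult_left_mono) auto
  have X: "x / x powr (1 + e / 2) = x powr (- e / 2)"
  proof -
    have "x / x powr (1 + e / 2) = x powr 1 / x powr (1 + e / 2)" using x by simp
    also have "\<dots> = x powr (1 - (1 + e / 2))" by (rule powr_diff[symmetric])
    finally show ?thesis by simp
  qed
  have "x * (2 powr (2 + e) * (\<beta> powr (1 + e / 2) / x powr (1 + e / 2)))
      = 2 powr (2 + e) * \<beta> powr (1 + e / 2) * (x / x powr (1 + e / 2))"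
    by (rule rearr)
  with A X show ?thesis by simp
qed

lemma part2:
  fixes c :: "nat \<Rightarrow> nat \<Rightarrow> complex" and N :: nat and h :: "real \<Rightarrow> complex"
    and A \<mu> :: complex and \<nu> \<epsilon> :: real
  assumes hC: "C0inf h" and nu: "\<nu> > 0" and eps: "\<epsilon> > 0"
    and hyp: "(\<lambda>T. (\<Sum>p | prime p \<and> real p \<le> T \<and> c N p \<noteq> 0. c 2 p * of_real (ln (real p)))
                      - A * of_real T powr \<mu>)
                 \<in> O[at_top](\<lambda>T. of_real (T powr (\<nu> + 2 * \<epsilon>)))"
  shows "(\<lambda>x. S2tilde c N h x
                 - \<mu> * A * integral {0<..} (\<lambda>u. h (x * u ^ 2) * of_real u powr \<mu> / of_real u))
               \<in> O[at_right 0](\<lambda>x. of_real (x powr (- \<nu> / 2 - \<epsilon>)))"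
proof -
  define S where "S T = (\<Sum>p | prime p \<and> real p \<le> T \<and> c N p \<noteq> 0. c 2 p * of_real (ln (real p)))" for T :: real
  define E where "E T = S T - A * of_real T powr \<mu>" for T :: real
  define h' where "h' y = vector_derivative h (at y)" for y
  obtain \<alpha> \<beta> where ab: "0 < \<alpha>" "\<alpha> \<le> \<beta>" and hz: "\<And>y. y > 0 \<Longrightarrow> y \<notin> {\<alpha>..\<beta>} \<Longrightarrow> h y = 0"
    and hd: "\<And>y. y > 0 \<Longrightarrow> (h has_vector_derivative h' y) (at y)"
    and h'c: "\<And>y. y > 0 \<Longrightarrow> isCont h' y"
    using h_facts[OF hC] unfolding h'_def by blast
  have b0: "\<beta> > 0" using ab by simp
  define Y where "Y = (sqrt \<beta> + 1) ^ 2"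
  obtain H1 where H10: "H1 \<ge> 0" and H1: "\<And>y. y \<in> {\<alpha>/4..Y} \<Longrightarrow> norm (h' y) \<le> H1"
    using bounded_on_interval[of "\<alpha>/4" Y h'] h'c ab by force
  obtain CE where CE0: "CE > 0" and evE: "eventually (\<lambda>T. norm (E T) \<le> CE * norm (of_real (T powr (\<nu> + 2 * \<epsilon>)) :: complex)) at_top"
    using hyp unfolding E_def S_def by (elim landau_o.bigE) 
  obtain T0 where T0: "\<And>T. T \<ge> T0 \<Longrightarrow> norm (E T) \<le> CE * norm (of_real (T powr (\<nu> + 2 * \<epsilon>)) :: complex)"
    using evE unfolding eventually_at_top_linorder by blast
  define T1 where "T1 = max T0 1"
  have T11: "T1 \<ge> 1" unfolding T1_def by simp
  define x0 where "x0 = min 1 (min \<beta> (\<alpha> / (4 * T1 ^ 2)))"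
  have x00: "x0 > 0" unfolding x0_def using ab T11 by simp
  define ee where "ee = \<nu> + 2 * \<epsilon>"
  have ee0: "ee \<ge> 0" unfolding ee_def using nu eps by simp
  define K where "K = 2 * CE * H1 * (2 powr (2 + ee) * \<beta> powr (1 + ee / 2))"
  have main: "norm (S2tilde c N h x
                 - \<mu> * A * integral {0<..} (\<lambda>u. h (x * u ^ 2) * of_real u powr \<mu> / of_real u))
              \<le> K * norm (of_real (x powr (- \<nu> / 2 - \<epsilon>)) :: complex)"
    if x: "0 < x" "x < x0" for x
  proof -
    have x1: "x \<le> 1" "x \<le> \<beta>" "x \<le> \<alpha> / (4 * T1 ^ 2)" using x unfolding x0_def by auto
    define R where "R = sqrt (\<beta> / x)"
    have R1: "R \<ge> 1" unfolding R_def using x x1 by simp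
    define a0 where "a0 = sqrt (\<alpha> / x) / 2"
    define B where "B = R + 1"
    have a0pos: "a0 > 0" unfolding a0_def using x ab by simp
    have a0T: "a0 \<ge> T1"
    proof -
      have "4 * T1 ^ 2 \<le> \<alpha> / x" using x1(3) x T11 by (simp add: field_simps)
      then have "sqrt (4 * T1 ^ 2) \<le> sqrt (\<alpha> / x)" by (rule real_sqrt_le_mono)
      moreover have "sqrt (4 * T1 ^ 2) = 2 * T1" using T11 by (simp add: real_sqrt_mult)
      ultimately show ?thesis unfolding a0_def by simp
    qed
    have a0B: "a0 \<le> B"
    proof -
      have "sqrt (\<alpha> / x) \<le> R" unfolding R_def using ab x by (intro real_sqrt_le_mono divide_right_mono) auto
      moreover have "sqrt (\<alpha> / x) \<ge> 0" using ab x by simp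
      ultimately show ?thesis unfolding a0_def B_def using R1 by simp
    qed
    have BR: "B \<le> 2 * R" unfolding B_def using R1 by simp
    have B0: "B > 0" unfolding B_def using R1 by simp
    have xa0: "x * a0 ^ 2 = \<alpha> / 4" unfolding a0_def using x ab by (simp add: power_divide)
    have xR: "x * R ^ 2 = \<beta>" unfolding R_def using x ab by simp
    have xB: "x * B ^ 2 > \<beta>"
    proof -
      have "R ^ 2 < B ^ 2" unfolding B_def using R1 by (intro power_strict_mono) auto
      then have "x * R ^ 2 < x * B ^ 2" using x by simp
      then show ?thesis using xR by simp
    qed
    have xBY: "x * B ^ 2 \<le> Y"
    proof -
      have "sqrt x * R = sqrt \<beta>" unfolding R_def using x by (simp add: real_sqrt_mult[symmetric])
      then have "sqrt x * B = sqrt \<beta> + sqrt x" unfolding B_def by (simp add: algebra_simps)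
      moreover have "x * B ^ 2 = (sqrt x * B) ^ 2" using x by (simp add: power_mult_distrib)
      ultimately have "x * B ^ 2 = (sqrt \<beta> + sqrt x) ^ 2" by simp
      also have "\<dots> \<le> (sqrt \<beta> + 1) ^ 2" using x1 x by (intro power_mono add_left_mono) auto
      finally show ?thesis unfolding Y_def .
    qed
    define g where "g t = h (x * t ^ 2)" for t
    define g' where "g' t = of_real (2 * x * t) * h' (x * t ^ 2)" for t
    have deriv: "(g has_vector_derivative g' t) (at t)" if t: "t \<in> {a0..B}" for t
    proof -
      have t0: "t > 0" using t a0pos by auto
      have "((\<lambda>t. x * t ^ 2) has_real_derivative (2 * x * t)) (at t)"
        by (auto intro!: derivative_eq_intros)
      then have d1: "((\<lambda>t. x * t ^ 2) has_vector_derivative (2 * x * t)) (at t)"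
        by (simp add: has_real_derivative_iff_has_vector_derivative)
      have d2: "(h has_vector_derivative h' (x * t ^ 2)) (at (x * t ^ 2))"
        using hd x t0 by simp
      have "((h \<circ> (\<lambda>t. x * t ^ 2)) has_vector_derivative ((2 * x * t) *\<^sub>R h' (x * t ^ 2))) (at t)"
        by (rule vector_diff_chain_at[OF d1 d2])
      then show ?thesis unfolding g_def g'_def by (simp add: o_def scaleR_conv_of_real)
    qed
    have gB: "g B = 0" unfolding g_def using xB x B0 by (intro hz) auto
    have ga0: "g a0 = 0" unfolding g_def using xa0 x a0pos ab by (intro hz) auto
    define K' where "K' = nat \<lfloor>B\<rfloor>"
    define w where "w n = (if prime n \<and> c N n \<noteq> 0 then c 2 n * of_real (ln (real n)) else 0)" for n :: nat
    have small: "w n * g (real n) = 0" if "n \<le> K'" "real n < a0" for n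
    proof (cases "n = 0")
      case True
      then show ?thesis unfolding w_def by simp
    next
      case False
      then have n0: "real n > 0" by simp
      have "x * (real n) ^ 2 < x * a0 ^ 2"
        using that(2) n0 x by (intro mult_strict_left_mono power_strict_mono) auto
      then have "x * (real n) ^ 2 < \<alpha>" using xa0 ab by simp
      then have "g (real n) = 0" unfolding g_def using x n0 by (intro hz) auto
      then show ?thesis by simp
    qed
    have big: "real n \<le> B" if "n \<le> K'" for n
    proof -
      have "real n \<le> real K'" using that by simp
      also have "real K' \<le> B" unfolding K'_def using B0 by linarith
      finally show ?thesis .
    qed
    have abel: "((\<lambda>t. (\<Sum>n\<in>{..K'}. if real n \<le> t then w n else 0) * g' t)
          has_integral (- (\<Sum>n\<in>{..K'}. w n * g (real n)))) {a0..B}"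
      by (rule abel_identity[OF a0B deriv gB ga0 small big])
    have S2: "S2tilde c N h x = (\<Sum>n\<in>{..K'}. w n * g (real n))"
    proof -
      have fe: "(\<lambda>p. if prime p \<and> c N p \<noteq> 0 then c 2 p * of_real (ln (real p)) * h (x * (real p) ^ 2) else 0)
          = (\<lambda>p. w p * g (real p))" by (auto simp: w_def g_def fun_eq_iff)
      show ?thesis unfolding S2tilde_def fe
      proof (rule suminf_finite)
        fix n assume "n \<notin> {..K'}"
        then have "n \<ge> K' + 1" by simp
        then have "real n > B" unfolding K'_def using B0 by linarith
        then have "x * (real n) ^ 2 > x * B ^ 2"
          using B0 x by (intro mult_strict_left_mono power_strict_mono) auto
        then have gt: "x * (real n) ^ 2 > \<beta>" using xB by linarith
        then have "g (real n) = 0" unfolding g_def using b0 by (intro hz) auto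
        then show "w n * g (real n) = 0" by simp
      qed simp
    qed
    have Seq: "S t = (\<Sum>n\<in>{..K'}. if real n \<le> t then w n else 0)" if t: "t \<in> {a0..B}" for t
    proof -
      have "{p. prime p \<and> real p \<le> t \<and> c N p \<noteq> 0} = {n \<in> {..K'}. prime n \<and> real n \<le> t \<and> c N n \<noteq> 0}"
        using t unfolding K'_def by (auto simp: le_nat_floor)
      then have "S t = (\<Sum>n\<in>{n \<in> {..K'}. prime n \<and> real n \<le> t \<and> c N n \<noteq> 0}. c 2 n * of_real (ln (real n)))"
        unfolding S_def by simp
      also have "\<dots> = (\<Sum>n\<in>{..K'}. if prime n \<and> real n \<le> t \<and> c N n \<noteq> 0 then c 2 n * of_real (ln (real n)) else 0)"
        by (rule sum.inter_filter) simp
      also have "\<dots> = (\<Sum>n\<in>{..K'}. if real n \<le> t then w n else 0)"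
        by (intro sum.cong refl) (auto simp: w_def)
      finally show ?thesis .
    qed
    have I_S: "((\<lambda>t. S t * g' t) has_integral (- S2tilde c N h x)) {a0..B}"
      using abel unfolding S2[symmetric] by (rule has_integral_eq[rotated]) (simp add: Seq)
    define I where "I = integral {a0..B} (\<lambda>t. g t * of_real t powr \<mu> / of_real t)"
    have I_A: "((\<lambda>t. of_real t powr \<mu> * g' t) has_integral (- \<mu> * I)) {a0..B}"
      unfolding I_def by (rule ibp_powr[OF a0pos a0B deriv gB ga0])
    have F1: "((\<lambda>t. S t * g' t - A * (of_real t powr \<mu> * g' t)) has_integral (- S2tilde c N h x - A * (- \<mu> * I))) {a0..B}"
      by (rule has_integral_diff[OF I_S has_integral_mult_right[OF I_A]])
    have eqv: "- S2tilde c N h x - A * (- \<mu> * I) = - (S2tilde c N h x - \<mu> * A * I)"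
      by (simp add: algebra_simps)
    have "((\<lambda>t. S t * g' t - A * (of_real t powr \<mu> * g' t)) has_integral (- (S2tilde c N h x - \<mu> * A * I))) {a0..B}"
      using F1 unfolding eqv .
    then have I_E: "((\<lambda>t. E t * g' t) has_integral (- (S2tilde c N h x - \<mu> * A * I))) {a0..B}"
      by (rule has_integral_eq[rotated]) (auto simp: E_def algebra_simps)
    have Iint: "integral {0<..} (\<lambda>u. h (x * u ^ 2) * of_real u powr \<mu> / of_real u) = I"
    proof -
      have "((\<lambda>t. g t * of_real t powr \<mu> / of_real t) has_integral I) {a0..B}"
        unfolding I_def using g_powr_integrable[OF a0pos deriv] by (rule integrable_integral)
      then have "((\<lambda>u. if u \<in> {a0..B} then g u * of_real u powr \<mu> / of_real u else 0) has_integral I) {0<..}"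
        using a0pos by (subst has_integral_restrict) auto
      then have "((\<lambda>u. h (x * u ^ 2) * of_real u powr \<mu> / of_real u) has_integral I) {0<..}"
      proof (rule has_integral_eq[rotated])
        fix u :: real assume u: "u \<in> {0<..}"
        show "(if u \<in> {a0..B} then g u * of_real u powr \<mu> / of_real u else 0) = h (x * u ^ 2) * of_real u powr \<mu> / of_real u"
        proof (cases "u \<in> {a0..B}")
          case True then show ?thesis unfolding g_def by simp
        next
          case False
          have "h (x * u ^ 2) = 0"
          proof (cases "u < a0")
            case True
            have "x * u ^ 2 < x * a0 ^ 2" using True u x by (intro mult_strict_left_mono power_strict_mono) auto
            then have "x * u ^ 2 < \<alpha>" using xa0 ab by linarith
            then show ?thesis using u x by (intro hz) auto
          next
            case False
            then have "u > B" using \<open>u \<notin> {a0..B}\<close> by auto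
            then have "x * u ^ 2 > x * B ^ 2" using B0 x by (intro mult_strict_left_mono power_strict_mono) auto
            then have "x * u ^ 2 > \<beta>" using xB by linarith
            then show ?thesis using u x by (intro hz) auto
          qed
          then show ?thesis using False by (simp only: if_False) simp
        qed
      qed
      then show ?thesis by (rule integral_unique)
    qed
    define Bd where "Bd = CE * B powr ee * (2 * x * B * H1)"
    have ptb: "norm (E t * g' t) \<le> Bd" if t: "t \<in> cbox a0 B" for t
    proof -
      have t': "a0 \<le> t" "t \<le> B" using t by auto
      have t0: "t > 0" using t' a0pos by simp
      have "norm (E t) \<le> CE * norm (of_real (t powr ee) :: complex)"
        unfolding ee_def using T0[of t] t' a0T unfolding T1_def by simp
      also have "\<dots> = CE * t powr ee" by simp
      also have "\<dots> \<le> CE * B powr ee" using CE0 t0 t' ee0 by (intro mult_left_mono powr_mono2) auto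
      finally have nE: "norm (E t) \<le> CE * B powr ee" .
      have xt: "x * t ^ 2 \<in> {\<alpha>/4..Y}"
      proof -
        have "x * a0 ^ 2 \<le> x * t ^ 2" using t' a0pos x by (intro mult_left_mono power_mono) auto
        moreover have "x * t ^ 2 \<le> x * B ^ 2" using t' t0 x by (intro mult_left_mono power_mono) auto
        ultimately show ?thesis using xa0 xBY by auto
      qed
      have "norm (g' t) = 2 * x * t * norm (h' (x * t ^ 2))"
        unfolding g'_def using x t0 by (simp add: norm_mult)
      also have "\<dots> \<le> 2 * x * B * H1"
        using H1[OF xt] t' x t0 H10 by (intro mult_mono) auto
      finally have ng: "norm (g' t) \<le> 2 * x * B * H1" .
      have "norm (E t * g' t) = norm (E t) * norm (g' t)" by (simp add: norm_mult)
      also have "\<dots> \<le> (CE * B powr ee) * (2 * x * B * H1)"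
        using nE ng CE0 by (intro mult_mono) (auto intro: order_trans[OF norm_ge_zero])
      finally show ?thesis unfolding Bd_def .
    qed
    have Bd0: "Bd \<ge> 0" unfolding Bd_def using CE0 x B0 H10 by simp
    have "norm (- (S2tilde c N h x - \<mu> * A * I)) \<le> Bd * Henstock_Kurzweil_Integration.content (cbox a0 B)"
      by (rule has_integral_bound[OF Bd0 _ ptb]) (use I_E in simp)
    also have "Henstock_Kurzweil_Integration.content (cbox a0 B) = B - a0" using a0B by simp
    also have "Bd * (B - a0) \<le> Bd * B" using Bd0 a0pos by (intro mult_left_mono) auto
    also have "Bd * B = 2 * CE * H1 * (x * (B ^ 2 * B powr ee))"
      unfolding Bd_def by (simp add: power2_eq_square mult_ac)
    also have "\<dots> \<le> 2 * CE * H1 * (2 powr (2 + ee) * \<beta> powr (1 + ee / 2) * x powr (- ee / 2))"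
      using final_pow[OF x(1) b0 R_def R1 B0 BR ee0] CE0 H10 by (intro mult_left_mono) auto
    also have "- ee / 2 = - \<nu> / 2 - \<epsilon>" unfolding ee_def by simp
    also have "2 * CE * H1 * (2 powr (2 + ee) * \<beta> powr (1 + ee / 2) * x powr (- \<nu> / 2 - \<epsilon>))
        = K * norm (of_real (x powr (- \<nu> / 2 - \<epsilon>)) :: complex)"
      unfolding K_def by (simp add: mult_ac)
    finally show ?thesis using Iint by (simp add: norm_minus_commute)
  qed
  show ?thesis
  proof (rule bigoI)
    show "eventually (\<lambda>x. norm (S2tilde c N h x
                 - \<mu> * A * integral {0<..} (\<lambda>u. h (x * u ^ 2) * of_real u powr \<mu> / of_real u))
              \<le> K * norm (of_real (x powr (- \<nu> / 2 - \<epsilon>)) :: complex)) (at_right 0)"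
      unfolding eventually_at_right_field using x00 main by (intro exI[of _ x0]) auto
  qed
qed

theorem lemma7:
  fixes \<phi> h :: "real \<Rightarrow> complex" and N :: nat and c :: "nat \<Rightarrow> nat \<Rightarrow> complex"
  assumes "N \<ge> 2"
    and "CL_class \<phi> N"
    and "euler_product_rank (\<lambda>n. \<phi> (real n)) N c"
    and "C0inf h"
  shows "(\<forall>\<epsilon>>0. S2tilde c N h \<in> O[at_right 0](\<lambda>x. of_real (x powr (-1/2 - \<epsilon>))))
    \<and> (\<forall>(A::complex) (\<mu>::complex) (\<nu>::real).
         \<nu> > 0 \<and> Re \<mu> > \<nu> \<and>
         (\<forall>\<epsilon>>0. (\<lambda>T. (\<Sum>p | prime p \<and> real p \<le> T \<and> c N p \<noteq> 0. c 2 p * of_real (ln (real p)))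
                      - A * of_real T powr \<mu>)
                 \<in> O[at_top](\<lambda>T. of_real (T powr (\<nu> + \<epsilon>))))
         \<longrightarrow> (\<forall>\<epsilon>>0. (\<lambda>x. S2tilde c N h x
                 - \<mu> * A * integral {0<..} (\<lambda>u. h (x * u ^ 2) * of_real u powr \<mu> / of_real u))
               \<in> O[at_right 0](\<lambda>x. of_real (x powr (- \<nu> / 2 - \<epsilon>)))))"
proof (intro conjI allI impI)
  have sc: "selberg_class (\<lambda>n. \<phi> (real n))" using assms(2) unfolding CL_class_def by blast
  fix \<epsilon> :: real assume "\<epsilon> > 0"
  then show "S2tilde c N h \<in> O[at_right 0](\<lambda>x. of_real (x powr (-1/2 - \<epsilon>)))"
    by (rule part1[OF sc assms(3) assms(1) assms(4)])
next
  fix A \<mu> :: complex and \<nu> \<epsilon> :: real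
  assume H: "\<nu> > 0 \<and> Re \<mu> > \<nu> \<and>
         (\<forall>\<epsilon>>0. (\<lambda>T. (\<Sum>p | prime p \<and> real p \<le> T \<and> c N p \<noteq> 0. c 2 p * of_real (ln (real p)))
                      - A * of_real T powr \<mu>)
                 \<in> O[at_top](\<lambda>T. of_real (T powr (\<nu> + \<epsilon>))))"
    and eps: "\<epsilon> > 0"
  have hyp: "(\<lambda>T. (\<Sum>p | prime p \<and> real p \<le> T \<and> c N p \<noteq> 0. c 2 p * of_real (ln (real p)))
                      - A * of_real T powr \<mu>)
                 \<in> O[at_top](\<lambda>T. of_real (T powr (\<nu> + 2 * \<epsilon>)))"
    using H eps by simp
  show "(\<lambda>x. S2tilde c N h x
                 - \<mu> * A * integral {0<..} (\<lambda>u. h (x * u ^ 2) * of_real u powr \<mu> / of_real u))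
               \<in> O[at_right 0](\<lambda>x. of_real (x powr (- \<nu> / 2 - \<epsilon>)))"
    by (rule part2[OF assms(4) _ eps hyp]) (use H in simp)
qed

end
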